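(* Consider a slotted system with diversity. There are $N$ users, $N_{sub}\ge2$ sub-carriers and slots $1,\dots,T$, where $0<\alpha<1$, $\alpha T\in\mathbb Z$ and $(1-\alpha)T$ is even. The BS uses pmfs $\mathbf p$ on users and $\mathbf q$ on sub-carriers: in every slot, independently, it chooses user $i$ with probability $p_i$ and sub-carrier $j$ with probability $q_j$, and transmits to that user on that sub-carrier. An adversarial blocking matrix is $\sigma\in\{0,1\}^{N_{sub}\times T}$, where $\sigma_j(t)=0$ means sub-carrier $j$ is blocked in slot $t$. It is feasible if $\sum_{j,t}(1-\sigma_j(t))\le\alpha T$ and at most one sub-carrier is blocked per slot. Ages satisfy $a_i(1)=1$, $a_i(t+1)=1$ if user $i$ is chosen in slot $t$ on an unblocked sub-carrier, and $a_i(t+1)=a_i(t)+1$ otherwise. The payoff is $\Delta^{\mathbf p,\mathbf q,\sigma}=\frac1T\sum_{t=1}^T\frac1N\sum_i\mathbb E[a_i(t)]$; the BS minimizes it and the adversary maximizes it. Let $\sigma'$ be the adversarial strategy that, in each slot $t\in\{\frac{(1-\alpha)T}2+1,\dots,\frac{(1+\alpha)T}2\}$, blocks one sub-carrier chosen uniformly at random (independently), and blocks nothing in other slots. Let $\bar{\mathbf p}$ and $\bar{\mathbf q}$ be the uniform pmfs. Then $(\bar{\mathbf p},\bar{\mathbf q},\sigma')$ is a Nash equilibrium. That is: - $(\bar{\mathbf p},\bar{\mathbf q})$ minimizes $\Delta^{\mathbf p,\mathbf q,\sigma'}$ over all pmfs $\mathbf p,\mathbf q$; and - $\sigma'$ attains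 $\max_{\sigma\text{ feasible}}\Delta^{\bar{\mathbf p},\bar{\mathbf q},\sigma}$.
   Context: The expectation under $\sigma'$ includes the adversary's randomness. *)

theory Defs
  imports "HOL-Probability.Probability"
begin

text \<open>Users are indexed by {..<N}, sub-carriers by {..<Nsub}, slots by {1..T}.
  A blocking matrix is sig :: nat => nat => nat with sig j t in {0,1};
  sig j t = 0 means sub-carrier j is blocked in slot t.
  A trajectory of BS choices is a function slot => (user, sub-carrier).\<close>

text \<open>age_aux sig x i n is the age a_i(n+1) of user i, given blocking matrix sig
  and the BS choices x (x t = (user chosen in slot t, sub-carrier chosen in slot t)).\<close>
primrec age_aux :: "(nat \<Rightarrow> nat \<Rightarrow> nat) \<Rightarrow> (nat \<Rightarrow> nat \<times> nat) \<Rightarrow> nat \<Rightarrow> nat \<Rightarrow> nat" where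
  "age_aux sig x i 0 = 1"
| "age_aux sig x i (Suc n) =
     (if fst (x (Suc n)) = i \<and> sig (snd (x (Suc n))) (Suc n) = 1 then 1
      else age_aux sig x i n + 1)"

definition age :: "(nat \<Rightarrow> nat \<Rightarrow> nat) \<Rightarrow> (nat \<Rightarrow> nat \<times> nat) \<Rightarrow> nat \<Rightarrow> nat \<Rightarrow> nat" where
  "age sig x i t = age_aux sig x i (t - 1)"

definition bs_traj :: "nat \<Rightarrow> nat pmf \<Rightarrow> nat pmf \<Rightarrow> (nat \<Rightarrow> nat \<times> nat) pmf" where
  "bs_traj T p q = Pi_pmf {1..T} (0, 0) (\<lambda>_. pair_pmf p q)"

definition payoff :: "nat \<Rightarrow> nat \<Rightarrow> nat pmf \<Rightarrow> nat pmf \<Rightarrow> (nat \<Rightarrow> nat \<Rightarrow> nat) pmf \<Rightarrow> real" where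
  "payoff N T p q S =
     (1 / real T) * (\<Sum>t\<in>{1..T}. (1 / real N) * (\<Sum>i<N.
        measure_pmf.expectation (pair_pmf S (bs_traj T p q))
          (\<lambda>(sig, x). real (age sig x i t))))"

definition payoff_det :: "nat \<Rightarrow> nat \<Rightarrow> nat pmf \<Rightarrow> nat pmf \<Rightarrow> (nat \<Rightarrow> nat \<Rightarrow> nat) \<Rightarrow> real" where
  "payoff_det N T p q sig = payoff N T p q (return_pmf sig)"

definition feasible :: "nat \<Rightarrow> nat \<Rightarrow> real \<Rightarrow> (nat \<Rightarrow> nat \<Rightarrow> nat) \<Rightarrow> bool" where
  "feasible Nsub T \<alpha> sig \<longleftrightarrow>
     (\<forall>j<Nsub. \<forall>t\<in>{1..T}. sig j t \<in> {0, 1}) \<and>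
     real (\<Sum>j<Nsub. \<Sum>t\<in>{1..T}. 1 - sig j t) \<le> \<alpha> * real T \<and>
     (\<forall>t\<in>{1..T}. (\<Sum>j<Nsub. 1 - sig j t) \<le> 1)"

definition window :: "nat \<Rightarrow> real \<Rightarrow> nat set" where
  "window T \<alpha> = {t. (1 - \<alpha>) * real T / 2 + 1 \<le> real t \<and> real t \<le> (1 + \<alpha>) * real T / 2}"

definition sigma' :: "nat \<Rightarrow> nat \<Rightarrow> real \<Rightarrow> (nat \<Rightarrow> nat \<Rightarrow> nat) pmf" where
  "sigma' Nsub T \<alpha> =
     map_pmf (\<lambda>b j t. if t \<in> window T \<alpha> \<and> b t = j then 0 else 1)
       (Pi_pmf (window T \<alpha>) 0 (\<lambda>_. pmf_of_set {..<Nsub}))"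

end

theory Submission
  imports Defs
begin


definition PP :: "real \<Rightarrow> nat \<Rightarrow> real" where "PP x m = (\<Sum>l<m. x^l)"

lemma PP_add: "PP x (m + n) = PP x m + x^m * PP x n"
  by (induction n) (simp_all add: PP_def power_add distrib_left)

lemma PP_nonneg: "x \<ge> 0 \<Longrightarrow> PP x m \<ge> 0"
  by (simp add: PP_def sum_nonneg)

lemma PP_0[simp]: "PP x 0 = 0" by (simp add: PP_def)

lemma PP_mono: "x \<ge> 0 \<Longrightarrow> m \<le> n \<Longrightarrow> PP x m \<le> PP x n"
  using PP_add[of x m "n-m"] PP_nonneg[of x "n-m"] by simp

lemma PP_alt: "PP x a = (\<Sum>u\<in>{1..a}. x^(a-u))"
proof -
  have "(\<Sum>u\<in>{1..a}. x^(a-u)) = (\<Sum>l<a. x^l)"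
    by (rule sum.reindex_bij_witness[where i="\<lambda>l. a - l" and j="\<lambda>u. a - u"]) auto
  then show ?thesis by (simp add: PP_def)
qed

lemma PP_alt2: "PP x (T - a) = (\<Sum>t\<in>{Suc a..T}. x^(t - Suc a))"
proof -
  have "(\<Sum>t\<in>{Suc a..T}. x^(t - Suc a)) = (\<Sum>l<T-a. x^l)"
    by (rule sum.reindex_bij_witness[where i="\<lambda>l. l + Suc a" and j="\<lambda>t. t - Suc a"]) auto
  then show ?thesis by (simp add: PP_def)
qed

lemma first_d:
  fixes \<delta> :: "nat \<Rightarrow> real"
  shows "u \<le> t \<Longrightarrow> (\<Prod>s\<in>{u..<t}. x + \<delta> s) =
     x^(t-u) + (\<Sum>a\<in>{u..<t}. x^(a-u) * \<delta> a * (\<Prod>s\<in>{Suc a..<t}. x + \<delta> s))"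
proof (induction "t - u" arbitrary: u)
  case 0
  then show ?case by simp
next
  case (Suc k)
  then have ut: "u < t" by simp
  have IH: "(\<Prod>s\<in>{Suc u..<t}. x + \<delta> s) =
     x^(t-Suc u) + (\<Sum>a\<in>{Suc u..<t}. x^(a-Suc u) * \<delta> a * (\<Prod>s\<in>{Suc a..<t}. x + \<delta> s))"
    using Suc by simp
  have e1: "{u..<t} = insert u {Suc u..<t}" using ut by auto
  have "(\<Prod>s\<in>{u..<t}. x + \<delta> s) = (x + \<delta> u) * (\<Prod>s\<in>{Suc u..<t}. x + \<delta> s)"
    by (simp add: e1)
  also have "\<dots> = \<delta> u * (\<Prod>s\<in>{Suc u..<t}. x + \<delta> s) + x * (\<Prod>s\<in>{Suc u..<t}. x + \<delta> s)"
    by (simp add: algebra_simps)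
  also have "x * (\<Prod>s\<in>{Suc u..<t}. x + \<delta> s) = x^(t-u) + (\<Sum>a\<in>{Suc u..<t}. x^(a-u) * \<delta> a * (\<Prod>s\<in>{Suc a..<t}. x + \<delta> s))"
  proof -
    have "x * x^(t-Suc u) = x^(t-u)" using ut
      by (metis Suc_diff_Suc power_Suc)
    moreover have "x * (\<Sum>a\<in>{Suc u..<t}. x^(a-Suc u) * \<delta> a * (\<Prod>s\<in>{Suc a..<t}. x + \<delta> s))
        = (\<Sum>a\<in>{Suc u..<t}. x^(a-u) * \<delta> a * (\<Prod>s\<in>{Suc a..<t}. x + \<delta> s))"
      unfolding sum_distrib_left
      by (rule sum.cong) (auto simp: Suc_diff_Suc power_Suc[symmetric] mult.assoc simp del: power_Suc)
    ultimately show ?thesis using IH by (simp add: distrib_left)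
  qed
  finally show ?case by (simp add: e1 add.commute add.left_commute)
qed

lemma last_d:
  fixes \<delta> :: "nat \<Rightarrow> real"
  shows "v \<le> t \<Longrightarrow> (\<Prod>s\<in>{v..<t}. x + \<delta> s) =
     x^(t-v) + (\<Sum>e\<in>{v..<t}. (\<Prod>s\<in>{v..<e}. x + \<delta> s) * \<delta> e * x^(t - Suc e))"
proof (induction t)
  case 0
  then show ?case by simp
next
  case (Suc t)
  show ?case
  proof (cases "v = Suc t")
    case True then show ?thesis by simp
  next
    case False
    then have vt: "v \<le> t" using Suc by simp
    have IH: "(\<Prod>s\<in>{v..<t}. x + \<delta> s) =
     x^(t-v) + (\<Sum>e\<in>{v..<t}. (\<Prod>s\<in>{v..<e}. x + \<delta> s) * \<delta> e * x^(t - Suc e))"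
      using Suc vt by simp
    have "(\<Prod>s\<in>{v..<Suc t}. x + \<delta> s) = (\<Prod>s\<in>{v..<t}. x + \<delta> s) * (x + \<delta> t)"
      using vt by (simp add: prod.atLeastLessThan_Suc)
    also have "\<dots> = x^(Suc t - v) + (\<Sum>e\<in>{v..<t}. (\<Prod>s\<in>{v..<e}. x + \<delta> s) * \<delta> e * x^(Suc t - Suc e))
         + (\<Prod>s\<in>{v..<t}. x + \<delta> s) * \<delta> t"
    proof -
      have a: "x^(t-v) * x = x^(Suc t - v)" using vt by (simp add: Suc_diff_le)
      have b: "(\<Sum>e\<in>{v..<t}. (\<Prod>s\<in>{v..<e}. x + \<delta> s) * \<delta> e * x^(t - Suc e)) * x
          = (\<Sum>e\<in>{v..<t}. (\<Prod>s\<in>{v..<e}. x + \<delta> s) * \<delta> e * x^(Suc t - Suc e))"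
        unfolding sum_distrib_right
      proof (rule sum.cong)
        fix e assume "e \<in> {v..<t}"
        then have "x^(t - Suc e) * x = x^(Suc t - Suc e)"
          by (metis Suc_diff_Suc atLeastLessThan_iff diff_Suc_Suc power_Suc2)
        then show "(\<Prod>s\<in>{v..<e}. x + \<delta> s) * \<delta> e * x^(t - Suc e) * x = (\<Prod>s\<in>{v..<e}. x + \<delta> s) * \<delta> e * x^(Suc t - Suc e)"
          by (simp add: mult.assoc)
      qed simp
      show ?thesis unfolding IH using a b by (simp add: algebra_simps)
    qed
    also have "\<dots> = x^(Suc t - v) + (\<Sum>e\<in>{v..<Suc t}. (\<Prod>s\<in>{v..<e}. x + \<delta> s) * \<delta> e * x^(Suc t - Suc e))"
      using vt by (simp add: sum.atLeastLessThan_Suc)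
    finally show ?thesis .
  qed
qed

lemma tri_swap:
  fixes g :: "nat \<Rightarrow> nat \<Rightarrow> real"
  shows "(\<Sum>t\<in>{m..T}. \<Sum>e\<in>{m..<t}. g e t) = (\<Sum>e\<in>{m..<T}. \<Sum>t\<in>{Suc e..T}. g e t)"
proof -
  have "(\<Sum>t\<in>{m..T}. \<Sum>e\<in>{m..<t}. g e t) = (\<Sum>t\<in>{m..T}. \<Sum>e\<in>{e. e \<in> {m..<T} \<and> e < t}. g e t)"
    by (rule sum.cong) (auto intro!: sum.cong)
  also have "\<dots> = (\<Sum>e\<in>{m..<T}. \<Sum>t\<in>{t. t \<in> {m..T} \<and> e < t}. g e t)"
    by (rule sum.swap_restrict) auto
  also have "\<dots> = (\<Sum>e\<in>{m..<T}. \<Sum>t\<in>{Suc e..T}. g e t)"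
    by (rule sum.cong) (auto intro!: sum.cong)
  finally show ?thesis .
qed

lemma tri_swap2:
  fixes g :: "nat \<Rightarrow> nat \<Rightarrow> real"
  shows "(\<Sum>u\<in>{m..t}. \<Sum>a\<in>{u..<t}. g u a) = (\<Sum>a\<in>{m..<t}. \<Sum>u\<in>{m..a}. g u a)"
proof -
  have "(\<Sum>u\<in>{m..t}. \<Sum>a\<in>{u..<t}. g u a) = (\<Sum>u\<in>{m..t}. \<Sum>a\<in>{a. a \<in> {m..<t} \<and> u \<le> a}. g u a)"
    by (rule sum.cong) (auto intro!: sum.cong)
  also have "\<dots> = (\<Sum>a\<in>{m..<t}. \<Sum>u\<in>{u. u \<in> {m..t} \<and> u \<le> a}. g u a)"
    by (rule sum.swap_restrict) auto
  also have "\<dots> = (\<Sum>a\<in>{m..<t}. \<Sum>u\<in>{m..a}. g u a)"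
    by (rule sum.cong) (auto intro!: sum.cong)
  finally show ?thesis .
qed

lemma swap3:
  fixes f :: "nat \<Rightarrow> nat \<Rightarrow> nat \<Rightarrow> real"
  shows "(\<Sum>t\<in>{1..T}. \<Sum>u\<in>{1..t}. \<Sum>a\<in>{u..<t}. f u a t) = (\<Sum>a\<in>{1..<T}. \<Sum>u\<in>{1..a}. \<Sum>t\<in>{Suc a..T}. f u a t)"
proof -
  have "(\<Sum>t\<in>{1..T}. \<Sum>u\<in>{1..t}. \<Sum>a\<in>{u..<t}. f u a t) = (\<Sum>t\<in>{1..T}. \<Sum>a\<in>{1..<t}. \<Sum>u\<in>{1..a}. f u a t)"
    by (rule sum.cong) (simp_all add: tri_swap2)
  also have "\<dots> = (\<Sum>a\<in>{1..<T}. \<Sum>t\<in>{Suc a..T}. \<Sum>u\<in>{1..a}. f u a t)"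
    by (rule tri_swap)
  also have "\<dots> = (\<Sum>a\<in>{1..<T}. \<Sum>u\<in>{1..a}. \<Sum>t\<in>{Suc a..T}. f u a t)"
    by (rule sum.cong) (simp_all add: sum.swap[of _ "{Suc _..T}"])
  finally show ?thesis .
qed

definition GG :: "nat \<Rightarrow> (nat \<Rightarrow> real) \<Rightarrow> real" where
  "GG T z = (\<Sum>t\<in>{1..T}. \<Sum>u\<in>{1..t}. \<Prod>s\<in>{u..<t}. z s)"

lemma GG_expand:
  fixes \<delta> :: "nat \<Rightarrow> real"
  shows "GG T (\<lambda>s. x + \<delta> s) = GG T (\<lambda>_. x)
    + (\<Sum>a\<in>{1..<T}. \<delta> a * PP x a * PP x (T - a))
    + (\<Sum>a\<in>{1..<T}. \<Sum>e\<in>{Suc a..<T}. \<delta> a * \<delta> e * (\<Prod>s\<in>{Suc a..<e}. x + \<delta> s) * PP x a * PP x (T - e))"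
proof -
  let ?z = "\<lambda>s. x + \<delta> s"
  have step: "(\<Prod>s\<in>{u..<t}. ?z s) = x^(t-u) + (\<Sum>a\<in>{u..<t}. x^(a-u) * \<delta> a * x^(t - Suc a))
     + (\<Sum>a\<in>{u..<t}. \<Sum>e\<in>{Suc a..<t}. x^(a-u) * \<delta> a * ((\<Prod>s\<in>{Suc a..<e}. ?z s) * \<delta> e * x^(t - Suc e)))"
    if "u \<le> t" for u t
  proof -
    have "(\<Prod>s\<in>{u..<t}. ?z s) = x^(t-u) + (\<Sum>a\<in>{u..<t}. x^(a-u) * \<delta> a * (\<Prod>s\<in>{Suc a..<t}. ?z s))"
      using first_d[OF that] .
    also have "(\<Sum>a\<in>{u..<t}. x^(a-u) * \<delta> a * (\<Prod>s\<in>{Suc a..<t}. ?z s))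
      = (\<Sum>a\<in>{u..<t}. x^(a-u) * \<delta> a * x^(t - Suc a))
     + (\<Sum>a\<in>{u..<t}. \<Sum>e\<in>{Suc a..<t}. x^(a-u) * \<delta> a * ((\<Prod>s\<in>{Suc a..<e}. ?z s) * \<delta> e * x^(t - Suc e)))"
      unfolding sum.distrib[symmetric]
    proof (rule sum.cong)
      fix a assume "a \<in> {u..<t}"
      then have "Suc a \<le> t" by simp
      from last_d[OF this, of x \<delta>] show "x^(a-u) * \<delta> a * (\<Prod>s\<in>{Suc a..<t}. ?z s) =
        x^(a-u) * \<delta> a * x^(t - Suc a) + (\<Sum>e\<in>{Suc a..<t}. x^(a-u) * \<delta> a * ((\<Prod>s\<in>{Suc a..<e}. ?z s) * \<delta> e * x^(t - Suc e)))"
        by (simp add: distrib_left sum_distrib_left)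
    qed simp
    finally show ?thesis by simp
  qed
  have "GG T ?z = (\<Sum>t\<in>{1..T}. \<Sum>u\<in>{1..t}. x^(t-u))
     + (\<Sum>t\<in>{1..T}. \<Sum>u\<in>{1..t}. \<Sum>a\<in>{u..<t}. x^(a-u) * \<delta> a * x^(t - Suc a))
     + (\<Sum>t\<in>{1..T}. \<Sum>u\<in>{1..t}. \<Sum>a\<in>{u..<t}. \<Sum>e\<in>{Suc a..<t}. x^(a-u) * \<delta> a * ((\<Prod>s\<in>{Suc a..<e}. ?z s) * \<delta> e * x^(t - Suc e)))"
    unfolding GG_def sum.distrib[symmetric]
    by (rule sum.cong[OF refl], rule sum.cong[OF refl]) (simp add: step)
  also have "(\<Sum>t\<in>{1..T}. \<Sum>u\<in>{1..t}. x^(t-u)) = GG T (\<lambda>_. x)"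
    unfolding GG_def by (intro sum.cong refl) simp
  also have "(\<Sum>t\<in>{1..T}. \<Sum>u\<in>{1..t}. \<Sum>a\<in>{u..<t}. x^(a-u) * \<delta> a * x^(t - Suc a))
     = (\<Sum>a\<in>{1..<T}. \<Sum>u\<in>{1..a}. \<Sum>t\<in>{Suc a..T}. x^(a-u) * \<delta> a * x^(t - Suc a))"
    by (rule swap3)
  also have "\<dots> = (\<Sum>a\<in>{1..<T}. \<delta> a * PP x a * PP x (T - a))"
  proof (intro sum.cong refl)
    fix a
    have "\<delta> a * PP x a * PP x (T - a) = \<delta> a * ((\<Sum>u\<in>{1..a}. x^(a-u)) * (\<Sum>t\<in>{Suc a..T}. x^(t - Suc a)))"
      by (simp only: PP_alt[of x a] PP_alt2[of x T a] mult.assoc)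
    also have "\<dots> = (\<Sum>u\<in>{1..a}. \<Sum>t\<in>{Suc a..T}. x^(a-u) * \<delta> a * x^(t - Suc a))"
      by (subst sum.swap) (simp add: sum_distrib_left sum_distrib_right mult_ac)
    finally show "(\<Sum>u\<in>{1..a}. \<Sum>t\<in>{Suc a..T}. x^(a-u) * \<delta> a * x^(t - Suc a)) = \<delta> a * PP x a * PP x (T - a)" by simp
  qed
  also have "(\<Sum>t\<in>{1..T}. \<Sum>u\<in>{1..t}. \<Sum>a\<in>{u..<t}. \<Sum>e\<in>{Suc a..<t}. x^(a-u) * \<delta> a * ((\<Prod>s\<in>{Suc a..<e}. ?z s) * \<delta> e * x^(t - Suc e)))
     = (\<Sum>a\<in>{1..<T}. \<Sum>u\<in>{1..a}. \<Sum>t\<in>{Suc a..T}. \<Sum>e\<in>{Suc a..<t}. x^(a-u) * \<delta> a * ((\<Prod>s\<in>{Suc a..<e}. ?z s) * \<delta> e * x^(t - Suc e)))"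
    by (rule swap3)
  also have "\<dots> = (\<Sum>a\<in>{1..<T}. \<Sum>u\<in>{1..a}. \<Sum>e\<in>{Suc a..<T}. \<Sum>t\<in>{Suc e..T}. x^(a-u) * \<delta> a * ((\<Prod>s\<in>{Suc a..<e}. ?z s) * \<delta> e * x^(t - Suc e)))"
    by (intro sum.cong refl tri_swap)
  also have "\<dots> = (\<Sum>a\<in>{1..<T}. \<Sum>e\<in>{Suc a..<T}. \<Sum>u\<in>{1..a}. \<Sum>t\<in>{Suc e..T}. x^(a-u) * \<delta> a * ((\<Prod>s\<in>{Suc a..<e}. ?z s) * \<delta> e * x^(t - Suc e)))"
    by (intro sum.cong refl sum.swap)
  also have "\<dots> = (\<Sum>a\<in>{1..<T}. \<Sum>e\<in>{Suc a..<T}. \<delta> a * \<delta> e * (\<Prod>s\<in>{Suc a..<e}. x + \<delta> s) * PP x a * PP x (T - e))"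
  proof (intro sum.cong refl)
    fix a e
    let ?p = "(\<Prod>s\<in>{Suc a..<e}. x + \<delta> s)"
    have "\<delta> a * \<delta> e * ?p * PP x a * PP x (T - e) = \<delta> a * \<delta> e * ?p * ((\<Sum>u\<in>{1..a}. x^(a-u)) * (\<Sum>t\<in>{Suc e..T}. x^(t - Suc e)))"
      by (simp only: PP_alt[of x a] PP_alt2[of x T e] mult.assoc)
    also have "\<dots> = (\<Sum>u\<in>{1..a}. \<Sum>t\<in>{Suc e..T}. x^(a-u) * \<delta> a * (?p * \<delta> e * x^(t - Suc e)))"
      by (subst sum.swap) (simp add: sum_distrib_left sum_distrib_right mult_ac)
    finally show "(\<Sum>u\<in>{1..a}. \<Sum>t\<in>{Suc e..T}. x^(a-u) * \<delta> a * (?p * \<delta> e * x^(t - Suc e))) = \<delta> a * \<delta> e * ?p * PP x a * PP x (T - e)" by simp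
  qed
  finally show ?thesis .
qed



lemma PP_Suc: "PP x (Suc a) = PP x a + x^a"
  by (simp add: PP_def)

lemma unimod_step:
  assumes x: "x \<ge> 0" and h: "2*a + 1 \<le> S"
  shows "PP x a * PP x (S - a) \<le> PP x (Suc a) * PP x (S - Suc a)"
proof -
  define b where "b = S - Suc a"
  have Sb: "S - a = Suc b" using h by (simp add: b_def)
  have ab: "a \<le> b" using h by (simp add: b_def)
  have e: "PP x b = PP x (b - a) + x^(b-a) * PP x a"
    using PP_add[of x "b-a" a] ab by simp
  have "x^b * PP x a \<le> x^a * PP x b"
  proof -
    have "x^a * PP x b = x^a * PP x (b-a) + x^a * x^(b-a) * PP x a"
      by (simp add: e algebra_simps)
    also have "x^a * x^(b-a) = x^b" using ab by (simp add: power_add[symmetric])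
    finally show ?thesis using x PP_nonneg[of x "b-a"] by simp
  qed
  then show ?thesis unfolding Sb b_def[symmetric] PP_Suc by (simp add: algebra_simps)
qed

lemma unimod_mono:
  assumes x: "x \<ge> 0"
  shows "a \<le> a' \<Longrightarrow> 2*a' \<le> S + 1 \<Longrightarrow> PP x a * PP x (S - a) \<le> PP x a' * PP x (S - a')"
proof (induction a')
  case 0
  then show ?case by simp
next
  case (Suc a')
  show ?case
  proof (cases "a = Suc a'")
    case True then show ?thesis by simp
  next
    case False
    then have "PP x a * PP x (S - a) \<le> PP x a' * PP x (S - a')" using Suc by simp
    also have "\<dots> \<le> PP x (Suc a') * PP x (S - Suc a')"
      using unimod_step[OF x, of a' S] Suc.prems by simp
    finally show ?thesis .
  qed
qed

lemma central_pointwise: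
  assumes x: "x \<ge> 0" and S: "S = 2*k + c"
    and q: "q \<notin> {k+1..k+c}" and w: "w \<in> {k+1..k+c}"
  shows "PP x q * PP x (S - q) \<le> PP x w * PP x (S - w)"
proof (cases "S \<le> q")
  case True
  then have "PP x q * PP x (S - q) = 0" by simp
  moreover have "0 \<le> PP x w * PP x (S - w)" by (intro mult_nonneg_nonneg PP_nonneg x)
  ultimately show ?thesis by linarith
next
  case False
  define q' where "q' = min q (S - q)"
  define w' where "w' = min w (S - w)"
  have fq: "PP x q * PP x (S - q) = PP x q' * PP x (S - q')"
    using False by (auto simp: q'_def min_def mult.commute)
  have fw: "PP x w * PP x (S - w) = PP x w' * PP x (S - w')"
    using w S by (auto simp: w'_def min_def mult.commute)
  have "q' \<le> k" using q S False by (auto simp: q'_def)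
  moreover have "k \<le> w'" using w S by (auto simp: w'_def)
  moreover have "2*w' \<le> S + 1" by (auto simp: w'_def)
  ultimately have "PP x q' * PP x (S - q') \<le> PP x w' * PP x (S - w')"
    using unimod_mono[OF x, of q' w' S] by simp
  then show ?thesis using fq fw by simp
qed

lemma sum_le_swap:
  fixes f :: "nat \<Rightarrow> real"
  assumes "finite A" "finite B" "card A \<le> card B"
    and le: "\<And>a b. a \<in> A \<Longrightarrow> b \<in> B \<Longrightarrow> f a \<le> f b"
    and nn: "\<And>a. a \<in> A \<Longrightarrow> f a \<ge> 0" "\<And>b. b \<in> B \<Longrightarrow> f b \<ge> 0"
  shows "sum f A \<le> sum f B"
proof (cases "A = {}")
  case True then show ?thesis using nn by (simp add: sum_nonneg)
next
  case False
  define M where "M = Max (f ` A)"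
  have M0: "M \<ge> 0" using False assms(1) nn(1) unfolding M_def
    by (meson Max_ge_iff equals0I finite_imageI image_eqI image_is_empty)
  have "sum f A \<le> of_nat (card A) * M"
    by (rule sum_bounded_above) (use assms(1) in \<open>auto simp: M_def\<close>)
  also have "\<dots> \<le> of_nat (card B) * M" using M0 assms(3) by (simp add: mult_right_mono)
  also have "\<dots> \<le> sum f B"
  proof (rule sum_bounded_below)
    fix b assume b: "b \<in> B"
    have "M \<in> f ` A" unfolding M_def using False assms(1) by (intro Max_in) auto
    then show "M \<le> f b" using le b by auto
  qed
  finally show ?thesis .
qed

lemma central_sum:
  assumes x: "x \<ge> 0" and S: "S = 2*k + c" and Q: "finite Q" "card Q \<le> c"
  shows "(\<Sum>a\<in>Q. PP x a * PP x (S - a)) \<le> (\<Sum>a\<in>{k+1..k+c}. PP x a * PP x (S - a))"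
proof -
  let ?f = "\<lambda>a. PP x a * PP x (S - a)"
  let ?W = "{k+1..k+c}"
  have c1: "card Q = card (Q \<inter> ?W) + card (Q - ?W)"
    using Q(1) by (metis card_Int_Diff)
  have c2: "card ?W = card (?W \<inter> Q) + card (?W - Q)"
    by (metis card_Int_Diff finite_atLeastAtMost)
  have cW: "card ?W = c" by simp
  have "card (Q - ?W) \<le> card (?W - Q)" using c1 c2 cW Q(2) by (simp add: Int_commute)
  then have "sum ?f (Q - ?W) \<le> sum ?f (?W - Q)"
    by (intro sum_le_swap) (use Q(1) central_pointwise[OF x S] PP_nonneg[OF x] in auto)
  moreover have "sum ?f Q = sum ?f (Q \<inter> ?W) + sum ?f (Q - ?W)"
    using Q(1) by (rule sum.Int_Diff)
  moreover have "sum ?f ?W = sum ?f (?W \<inter> Q) + sum ?f (?W - Q)"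
    by (rule sum.Int_Diff) simp
  ultimately show ?thesis by (simp add: Int_commute)
qed



definition rr :: "nat set \<Rightarrow> nat \<Rightarrow> nat" where "rr B a = card {e\<in>B. a < e}"

definition PB :: "real \<Rightarrow> real \<Rightarrow> nat \<Rightarrow> nat set \<Rightarrow> real" where
  "PB x y T B = (\<Sum>m<T. y^m * (\<Sum>a\<in>{a\<in>B. m < rr B a}. PP x a * PP x (T - 1 - m - a)))"

definition Pairs :: "real \<Rightarrow> real \<Rightarrow> nat \<Rightarrow> nat set \<Rightarrow> real" where
  "Pairs x y T B = (\<Sum>a\<in>B. \<Sum>e\<in>{e\<in>B. a < e}.
      (\<Prod>s\<in>{Suc a..<e}. if s \<in> B then y else x) * PP x a * PP x (T - e))"

lemma prod_ifB: "finite A \<Longrightarrow> (\<Prod>s\<in>A. if s \<in> B then y else x) = y^card (A \<inter> B) * x^card (A - B)"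
  by (simp add: prod.If_cases Diff_eq)

lemma step1:
  assumes x: "0 \<le> x" "x \<le> y" and a: "a < e" and eT: "e < T"
  shows "(\<Prod>s\<in>{Suc a..<e}. if s \<in> B then y else x) * PP x (T - e)
     \<le> y^card (B \<inter> {Suc a..<e}) * PP x (T - 1 - card (B \<inter> {Suc a..<e}) - a)"
    and "{Suc a..<e} \<subseteq> B \<Longrightarrow> (\<Prod>s\<in>{Suc a..<e}. if s \<in> B then y else x) * PP x (T - e)
     = y^card (B \<inter> {Suc a..<e}) * PP x (T - 1 - card (B \<inter> {Suc a..<e}) - a)"
proof -
  define m where "m = card (B \<inter> {Suc a..<e})"
  define g where "g = card ({Suc a..<e} - B)"
  have mg: "m + g = e - Suc a"
    using card_Int_Diff[of "{Suc a..<e}" B] by (simp add: m_def g_def Int_commute)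
  have pr: "(\<Prod>s\<in>{Suc a..<e}. if s \<in> B then y else x) = y^m * x^g"
    unfolding m_def g_def by (simp add: prod_ifB Int_commute)
  have TT: "T - 1 - m - a = g + (T - e)" using mg a eT by simp
  have y0: "y \<ge> 0" using x by simp
  have "x^g * PP x (T - e) \<le> PP x (g + (T - e))"
    using PP_add[of x g "T - e"] PP_nonneg[OF x(1), of g] by simp
  then have "y^m * (x^g * PP x (T - e)) \<le> y^m * PP x (g + (T - e))"
    by (simp add: mult_left_mono y0)
  then show "(\<Prod>s\<in>{Suc a..<e}. if s \<in> B then y else x) * PP x (T - e)
     \<le> y^card (B \<inter> {Suc a..<e}) * PP x (T - 1 - card (B \<inter> {Suc a..<e}) - a)"
    unfolding pr TT[unfolded m_def] by (simp add: m_def mult.assoc)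
  assume "{Suc a..<e} \<subseteq> B"
  then have "g = 0" unfolding g_def by simp
  then show "(\<Prod>s\<in>{Suc a..<e}. if s \<in> B then y else x) * PP x (T - e)
     = y^card (B \<inter> {Suc a..<e}) * PP x (T - 1 - card (B \<inter> {Suc a..<e}) - a)"
    using pr TT by (simp add: m_def)
qed

lemma psub_w: "A \<subseteq> B \<Longrightarrow> x \<in> B \<Longrightarrow> x \<notin> A \<Longrightarrow> A \<subset> B"
  by blast

lemma step2_bij:
  assumes fin: "finite B"
  shows "bij_betw (\<lambda>e. card (B \<inter> {Suc a..<e})) {e\<in>B. a < e} {..<rr B a}"
proof -
  let ?h = "\<lambda>e. card (B \<inter> {Suc a..<e})"
  let ?E = "{e\<in>B. a < e}"
  have lt: "?h e < ?h e'" if "e \<in> ?E" "e' \<in> ?E" "e < e'" for e e'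
  proof -
    have "B \<inter> {Suc a..<e} \<subset> B \<inter> {Suc a..<e'}"
      by (rule psub_w[of _ _ e]) (use that in auto)
    moreover have "finite (B \<inter> {Suc a..<e'})" by simp
    ultimately show ?thesis by (simp add: psubset_card_mono)
  qed
  have inj: "inj_on ?h ?E"
  proof (rule inj_onI)
    fix e e' assume "e \<in> ?E" "e' \<in> ?E" "?h e = ?h e'"
    then show "e = e'" using lt[of e e'] lt[of e' e] by (cases e e' rule: linorder_cases) auto
  qed
  have sub: "?h ` ?E \<subseteq> {..<rr B a}"
  proof
    fix v assume "v \<in> ?h ` ?E"
    then obtain e where e: "e \<in> ?E" "v = ?h e" by auto
    have "B \<inter> {Suc a..<e} \<subset> ?E"
      by (rule psub_w[of _ _ e]) (use e in auto)
    moreover have "finite ?E" using fin by simp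
    ultimately have "?h e < card ?E" by (simp add: psubset_card_mono)
    then show "v \<in> {..<rr B a}" using e by (simp add: rr_def)
  qed
  have "card (?h ` ?E) = card {..<rr B a}"
    using card_image[OF inj] by (simp add: rr_def)
  then have "?h ` ?E = {..<rr B a}"
    by (rule card_subset_eq[OF finite_lessThan sub])
  then show ?thesis using inj by (simp add: bij_betw_def)
qed

lemma rr_le:
  assumes "finite B" "a \<in> B" shows "rr B a < card B"
proof -
  have "{e\<in>B. a < e} \<subset> B" using assms(2) by blast
  then show ?thesis unfolding rr_def using assms(1) by (simp add: psubset_card_mono)
qed

lemma Pairs_le_PB:
  assumes x: "0 \<le> x" "x \<le> y" and B: "B \<subseteq> {1..<T}"
  shows "Pairs x y T B \<le> PB x y T B"
    and "(\<And>a e s. a \<in> B \<Longrightarrow> e \<in> B \<Longrightarrow> a < s \<Longrightarrow> s < e \<Longrightarrow> s \<in> B) \<Longrightarrow> Pairs x y T B = PB x y T B"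
proof -
  have fin: "finite B" using B finite_subset by blast
  let ?F = "\<lambda>a m. y^m * (PP x a * PP x (T - 1 - m - a))"
  have y0: "y \<ge> 0" using x by simp
  have eq2: "(\<Sum>e\<in>{e\<in>B. a < e}. ?F a (card (B \<inter> {Suc a..<e}))) = (\<Sum>m<rr B a. ?F a m)" if "a \<in> B" for a
    using sum.reindex_bij_betw[OF step2_bij[OF fin, of a], of "?F a"] by simp
  have eq3: "(\<Sum>a\<in>B. \<Sum>m<rr B a. ?F a m) = PB x y T B"
  proof -
    have "(\<Sum>a\<in>B. \<Sum>m<rr B a. ?F a m) = (\<Sum>a\<in>B. \<Sum>m\<in>{m. m \<in> {..<T} \<and> m < rr B a}. ?F a m)"
    proof (rule sum.cong[OF refl])
      fix a assume a: "a \<in> B"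
      have "rr B a < card B" using rr_le[OF fin a] .
      also have "card B \<le> card {1..<T}" using B by (intro card_mono) auto
      finally have "rr B a \<le> T" by simp
      then have "{m. m \<in> {..<T} \<and> m < rr B a} = {..<rr B a}" by auto
      then show "(\<Sum>m<rr B a. ?F a m) = (\<Sum>m\<in>{m. m \<in> {..<T} \<and> m < rr B a}. ?F a m)" by simp
    qed
    also have "\<dots> = (\<Sum>m\<in>{..<T}. \<Sum>a\<in>{a. a \<in> B \<and> m < rr B a}. ?F a m)"
      by (rule sum.swap_restrict) (use fin in auto)
    also have "\<dots> = PB x y T B" unfolding PB_def by (simp add: sum_distrib_left)
    finally show ?thesis .
  qed
  have "Pairs x y T B \<le> (\<Sum>a\<in>B. \<Sum>e\<in>{e\<in>B. a < e}. ?F a (card (B \<inter> {Suc a..<e})))"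
    unfolding Pairs_def
  proof (intro sum_mono)
    fix a e assume a: "a \<in> B" and e: "e \<in> {e\<in>B. a < e}"
    have eT: "e < T" using e B by auto
    have ae: "a < e" using e by simp
    have "(\<Prod>s\<in>{Suc a..<e}. if s \<in> B then y else x) * PP x (T - e) * PP x a \<le>
          y^card (B \<inter> {Suc a..<e}) * PP x (T - 1 - card (B \<inter> {Suc a..<e}) - a) * PP x a"
      by (rule mult_right_mono[OF step1(1)[OF x ae eT] PP_nonneg[OF x(1)]])
    then show "(\<Prod>s\<in>{Suc a..<e}. if s \<in> B then y else x) * PP x a * PP x (T - e) \<le> ?F a (card (B \<inter> {Suc a..<e}))"
      by (simp only: ac_simps)
  qed
  also have "\<dots> = (\<Sum>a\<in>B. \<Sum>m<rr B a. ?F a m)" by (rule sum.cong[OF refl]) (rule eq2)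
  also have "\<dots> = PB x y T B" by (rule eq3)
  finally show "Pairs x y T B \<le> PB x y T B" .
  assume iv: "\<And>a e s. a \<in> B \<Longrightarrow> e \<in> B \<Longrightarrow> a < s \<Longrightarrow> s < e \<Longrightarrow> s \<in> B"
  have "Pairs x y T B = (\<Sum>a\<in>B. \<Sum>e\<in>{e\<in>B. a < e}. ?F a (card (B \<inter> {Suc a..<e})))"
    unfolding Pairs_def
  proof (intro sum.cong refl)
    fix a e assume a: "a \<in> B" and e: "e \<in> {e\<in>B. a < e}"
    have eT: "e < T" using e B by auto
    have ae: "a < e" using e by simp
    have sub: "{Suc a..<e} \<subseteq> B"
    proof
      fix s assume "s \<in> {Suc a..<e}"
      then show "s \<in> B" using iv[of a e s] a e by auto
    qed
    show "(\<Prod>s\<in>{Suc a..<e}. if s \<in> B then y else x) * PP x a * PP x (T - e) = ?F a (card (B \<inter> {Suc a..<e}))"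
      using step1(2)[OF x ae eT sub] by (simp only: ac_simps)
  qed
  also have "\<dots> = (\<Sum>a\<in>B. \<Sum>m<rr B a. ?F a m)" by (rule sum.cong[OF refl]) (rule eq2)
  also have "\<dots> = PB x y T B" by (rule eq3)
  finally show "Pairs x y T B = PB x y T B" .
qed



lemma card_Q_bound:
  assumes fin: "finite B" and ne: "{a\<in>B. m < rr B a} \<noteq> {}"
  shows "card {a\<in>B. m < rr B a} + Suc m \<le> card B"
proof -
  let ?Q = "{a\<in>B. m < rr B a}"
  have finQ: "finite ?Q" using fin by simp
  define a0 where "a0 = Max ?Q"
  have a0: "a0 \<in> ?Q" unfolding a0_def using finQ ne by (rule Max_in)
  let ?E = "{e\<in>B. a0 < e}"
  have disj: "?Q \<inter> ?E = {}"
  proof -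
    have "\<And>a. a \<in> ?Q \<Longrightarrow> a \<le> a0" unfolding a0_def using finQ by simp
    then show ?thesis by fastforce
  qed
  have "card ?Q + card ?E = card (?Q \<union> ?E)" using disj fin by (simp add: card_Un_disjoint)
  also have "\<dots> \<le> card B" using fin by (intro card_mono) auto
  finally show ?thesis using a0 by (simp add: rr_def)
qed

lemma rr_W: "a \<in> {k+1..k+K} \<Longrightarrow> rr {k+1..k+K} a = k + K - a"
proof -
  assume "a \<in> {k+1..k+K}"
  then have "{e\<in>{k+1..k+K}. a < e} = {Suc a..k+K}" by auto
  then show ?thesis by (simp add: rr_def)
qed

lemma PB_le:
  assumes x: "0 \<le> x" "x \<le> y" and T: "T = 2*k + K" and fin: "finite B" and cB: "card B \<le> K"
  shows "PB x y T B \<le> PB x y T {k+1..k+K}"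
  unfolding PB_def
proof (intro sum_mono mult_left_mono)
  fix m assume m: "m \<in> {..<T}"
  show "0 \<le> y^m" using x by simp
  let ?Q = "{a\<in>B. m < rr B a}"
  let ?W = "{k+1..k+K}"
  let ?f = "\<lambda>a. PP x a * PP x (T - 1 - m - a)"
  have nn: "\<And>a. ?f a \<ge> 0" using PP_nonneg[OF x(1)] by simp
  show "sum ?f ?Q \<le> sum ?f {a\<in>?W. m < rr ?W a}"
  proof (cases "?Q = {}")
    case True
    then have "sum ?f ?Q = 0" by (simp only: sum.empty)
    moreover have "0 \<le> sum ?f {a\<in>?W. m < rr ?W a}" by (rule sum_nonneg) (use nn in auto)
    ultimately show ?thesis by linarith
  next
    case False
    have c: "card ?Q + Suc m \<le> card B" by (rule card_Q_bound[OF fin False])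
    have QW: "{a\<in>?W. m < rr ?W a} = {k+1..k+(K - 1 - m)}"
    proof (rule set_eqI)
      fix a
      show "a \<in> {a\<in>?W. m < rr ?W a} \<longleftrightarrow> a \<in> {k+1..k+(K - 1 - m)}"
      proof (cases "a \<in> ?W")
        case True
        then have "rr ?W a = k + K - a" by (rule rr_W)
        then show ?thesis using True c cB by auto
      next
        case False
        then show ?thesis by auto
      qed
    qed
    have S: "T - 1 - m = 2*k + (K - 1 - m)" using c cB T by simp
    have "sum ?f ?Q \<le> sum ?f {k+1..k+(K - 1 - m)}"
      using central_sum[OF x(1) S, of ?Q] c cB fin by simp
    then show ?thesis using QW by simp
  qed
qed

definition Sing :: "real \<Rightarrow> nat \<Rightarrow> nat set \<Rightarrow> real" where
  "Sing x T B = (\<Sum>a\<in>B. PP x a * PP x (T - a))"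

lemma GG_B:
  assumes B: "B \<subseteq> {1..<T}"
  shows "GG T (\<lambda>s. if s \<in> B then y else x) = GG T (\<lambda>_. x) + (y - x) * Sing x T B + (y - x)^2 * Pairs x y T B"
proof -
  define \<delta> where "\<delta> s = (if s \<in> B then y - x else 0)" for s
  have z: "(\<lambda>s. if s \<in> B then y else x) = (\<lambda>s. x + \<delta> s)" by (auto simp: \<delta>_def)
  have pz: "(\<Prod>s\<in>{Suc a..<e}. x + \<delta> s) = (\<Prod>s\<in>{Suc a..<e}. if s \<in> B then y else x)" for a e
    by (intro prod.cong refl) (auto simp: \<delta>_def)
  have s1: "(\<Sum>a\<in>{1..<T}. \<delta> a * PP x a * PP x (T - a)) = (y - x) * Sing x T B"
  proof -
    have "(\<Sum>a\<in>{1..<T}. \<delta> a * PP x a * PP x (T - a)) = (\<Sum>a\<in>{1..<T}. if a \<in> B then (y - x) * (PP x a * PP x (T - a)) else 0)"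
      by (intro sum.cong refl) (auto simp: \<delta>_def)
    also have "\<dots> = (\<Sum>a\<in>{1..<T} \<inter> B. (y - x) * (PP x a * PP x (T - a)))"
      by (simp add: sum.inter_restrict)
    also have "{1..<T} \<inter> B = B" using B by auto
    finally show ?thesis by (simp add: Sing_def sum_distrib_left)
  qed
  have s2: "(\<Sum>a\<in>{1..<T}. \<Sum>e\<in>{Suc a..<T}. \<delta> a * \<delta> e * (\<Prod>s\<in>{Suc a..<e}. x + \<delta> s) * PP x a * PP x (T - e))
     = (y - x)^2 * Pairs x y T B"
  proof -
    let ?g = "\<lambda>a e. (\<Prod>s\<in>{Suc a..<e}. if s \<in> B then y else x) * PP x a * PP x (T - e)"
    have "(\<Sum>a\<in>{1..<T}. \<Sum>e\<in>{Suc a..<T}. \<delta> a * \<delta> e * (\<Prod>s\<in>{Suc a..<e}. x + \<delta> s) * PP x a * PP x (T - e))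
        = (\<Sum>a\<in>{1..<T}. \<Sum>e\<in>{Suc a..<T}. \<delta> a * \<delta> e * ?g a e)"
      by (intro sum.cong refl) (simp only: pz mult.assoc)
    also have "\<dots> = (\<Sum>a\<in>{1..<T}. if a \<in> B then (\<Sum>e\<in>{Suc a..<T}. if e \<in> B then (y - x)^2 * ?g a e else 0) else 0)"
      by (intro sum.cong refl) (auto simp: \<delta>_def power2_eq_square intro!: sum.cong)
    also have "\<dots> = (\<Sum>a\<in>{1..<T} \<inter> B. (\<Sum>e\<in>{Suc a..<T} \<inter> B. (y - x)^2 * ?g a e))"
      by (simp add: sum.inter_restrict)
    also have "\<dots> = (\<Sum>a\<in>B. (\<Sum>e\<in>{e\<in>B. a < e}. (y - x)^2 * ?g a e))"
    proof -
      have "{1..<T} \<inter> B = B" using B by auto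
      moreover have "\<And>a. {Suc a..<T} \<inter> B = {e\<in>B. a < e}" using B by auto
      ultimately show ?thesis by simp
    qed
    finally show ?thesis by (simp add: Pairs_def sum_distrib_left)
  qed
  show ?thesis unfolding z GG_expand s1 s2 by simp
qed

theorem comb_main:
  assumes x: "0 \<le> x" "x \<le> y" and T: "T = 2*k + K" and k: "1 \<le> k"
    and B: "B \<subseteq> {1..<T}" and cB: "card B \<le> K"
  shows "GG T (\<lambda>s. if s \<in> B then y else x) \<le> GG T (\<lambda>s. if s \<in> {k+1..k+K} then y else x)"
proof -
  let ?W = "{k+1..k+K}"
  have W: "?W \<subseteq> {1..<T}" using T k by auto
  have fin: "finite B" using B finite_subset by blast
  have d: "0 \<le> y - x" using x by simp
  have "Sing x T B \<le> Sing x T ?W" unfolding Sing_def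
    using central_sum[OF x(1), of T k K B] T fin cB by simp
  moreover have "Pairs x y T B \<le> Pairs x y T ?W"
  proof -
    have "Pairs x y T B \<le> PB x y T B" by (rule Pairs_le_PB(1)[OF x B])
    also have "\<dots> \<le> PB x y T ?W" by (rule PB_le[OF x T fin cB])
    also have "\<dots> = Pairs x y T ?W" by (rule Pairs_le_PB(2)[OF x W, symmetric]) auto
    finally show ?thesis .
  qed
  ultimately have "(y - x) * Sing x T B + (y - x)^2 * Pairs x y T B \<le> (y - x) * Sing x T ?W + (y - x)^2 * Pairs x y T ?W"
    using d by (intro add_mono mult_left_mono) auto
  then show ?thesis unfolding GG_B[OF B] GG_B[OF W] by simp
qed



definition fl :: "(nat \<Rightarrow> nat \<Rightarrow> nat) \<Rightarrow> nat \<Rightarrow> nat \<Rightarrow> nat \<times> nat \<Rightarrow> real" where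
  "fl sig i s v = (if fst v = i \<and> sig (snd v) s = 1 then 0 else 1)"

lemma fl_nonneg: "fl sig i s v \<ge> 0" by (simp add: fl_def)

lemma age_aux_sum: "real (age_aux sig x i n) = (\<Sum>u\<in>{1..Suc n}. \<Prod>s\<in>{u..n}. fl sig i s (x s))"
proof (induction n)
  case 0
  then show ?case by simp
next
  case (Suc n)
  have e: "{1..Suc (Suc n)} = insert (Suc (Suc n)) {1..Suc n}" by auto
  have "(\<Sum>u\<in>{1..Suc (Suc n)}. \<Prod>s\<in>{u..Suc n}. fl sig i s (x s))
      = 1 + (\<Sum>u\<in>{1..Suc n}. \<Prod>s\<in>{u..Suc n}. fl sig i s (x s))"
    by (simp add: e)
  also have "(\<Sum>u\<in>{1..Suc n}. \<Prod>s\<in>{u..Suc n}. fl sig i s (x s))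
      = (\<Sum>u\<in>{1..Suc n}. fl sig i (Suc n) (x (Suc n)) * (\<Prod>s\<in>{u..n}. fl sig i s (x s)))"
    by (intro sum.cong refl) (auto simp: mult.commute)
  also have "\<dots> = fl sig i (Suc n) (x (Suc n)) * real (age_aux sig x i n)"
    by (simp only: Suc.IH sum_distrib_left)
  finally show ?case by (simp add: fl_def)
qed

lemma age_sum: "1 \<le> t \<Longrightarrow> real (age sig x i t) = (\<Sum>u\<in>{1..t}. \<Prod>s\<in>{u..<t}. fl sig i s (x s))"
proof -
  assume t: "1 \<le> t"
  then have t': "t = Suc (t - 1)" by simp
  have "real (age sig x i t) = (\<Sum>u\<in>{1..Suc (t-1)}. \<Prod>s\<in>{u..t-1}. fl sig i s (x s))"
    by (simp add: age_def age_aux_sum)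
  also have "\<dots> = (\<Sum>u\<in>{1..t}. \<Prod>s\<in>{u..<t}. fl sig i s (x s))"
    by (subst (1 2) t') (simp only: atLeastLessThanSuc_atLeastAtMost)
  finally show ?thesis .
qed

lemma fin_bs:
  assumes "finite (set_pmf p)" "finite (set_pmf q)"
  shows "finite (set_pmf (bs_traj T p q))"
  unfolding bs_traj_def using assms by (auto simp: set_Pi_pmf intro!: finite_PiE_dflt)

lemma exp_pair:
  fixes h :: "'a \<times> 'b \<Rightarrow> real"
  assumes A: "finite (set_pmf A)" and B: "finite (set_pmf B)"
  shows "measure_pmf.expectation (pair_pmf A B) h =
         measure_pmf.expectation A (\<lambda>a. measure_pmf.expectation B (\<lambda>b. h (a, b)))"
proof -
  have "measure_pmf.expectation (pair_pmf A B) h = (\<Sum>z\<in>set_pmf A \<times> set_pmf B. h z * pmf (pair_pmf A B) z)"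
    by (rule integral_measure_pmf_real) (use A B in auto)
  also have "\<dots> = (\<Sum>z\<in>set_pmf A \<times> set_pmf B. (case z of (a, b) \<Rightarrow> h (a, b) * (pmf A a * pmf B b)))"
    by (intro sum.cong refl) (auto simp: pmf_pair)
  also have "\<dots> = (\<Sum>a\<in>set_pmf A. \<Sum>b\<in>set_pmf B. h (a, b) * (pmf A a * pmf B b))"
    by (rule sum.cartesian_product[symmetric])
  also have "\<dots> = (\<Sum>a\<in>set_pmf A. (\<Sum>b\<in>set_pmf B. h (a, b) * pmf B b) * pmf A a)"
    by (simp add: sum_distrib_left sum_distrib_right mult_ac)
  also have "\<dots> = (\<Sum>a\<in>set_pmf A. measure_pmf.expectation B (\<lambda>b. h (a, b)) * pmf A a)"
    by (intro sum.cong refl arg_cong2[where f="(*)"] integral_measure_pmf_real[symmetric]) (use B in auto)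
  also have "\<dots> = measure_pmf.expectation A (\<lambda>a. measure_pmf.expectation B (\<lambda>b. h (a, b)))"
    by (rule integral_measure_pmf_real[symmetric]) (use A in auto)
  finally show ?thesis .
qed

lemma exp_bs:
  assumes p: "finite (set_pmf p)" and q: "finite (set_pmf q)" and t: "t \<in> {1..T}"
  shows "measure_pmf.expectation (bs_traj T p q) (\<lambda>x. real (age sig x i t)) =
    (\<Sum>u\<in>{1..t}. \<Prod>s\<in>{u..<t}. measure_pmf.expectation (pair_pmf p q) (fl sig i s))"
proof -
  have finbs: "finite (set_pmf (bs_traj T p q))" by (rule fin_bs[OF p q])
  have finpq: "finite (set_pmf (pair_pmf p q))" using p q by simp
  have "measure_pmf.expectation (bs_traj T p q) (\<lambda>x. real (age sig x i t)) =
        measure_pmf.expectation (bs_traj T p q) (\<lambda>x. \<Sum>u\<in>{1..t}. \<Prod>s\<in>{u..<t}. fl sig i s (x s))"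
    using t by (intro Bochner_Integration.integral_cong refl) (simp add: age_sum)
  also have "\<dots> = (\<Sum>u\<in>{1..t}. measure_pmf.expectation (bs_traj T p q) (\<lambda>x. \<Prod>s\<in>{u..<t}. fl sig i s (x s)))"
    by (rule Bochner_Integration.integral_sum) (use finbs in \<open>auto intro: integrable_measure_pmf_finite\<close>)
  also have "\<dots> = (\<Sum>u\<in>{1..t}. \<Prod>s\<in>{u..<t}. measure_pmf.expectation (pair_pmf p q) (fl sig i s))"
  proof (intro sum.cong refl)
    fix u assume u: "u \<in> {1..t}"
    define g where "g s v = (if s \<in> {u..<t} then fl sig i s v else 1)" for s v
    have sub: "{s\<in>{1..T}. s \<in> {u..<t}} = {u..<t}" using u t by auto
    have pe: "(\<Prod>s\<in>{u..<t}. fl sig i s (x s)) = (\<Prod>s\<in>{1..T}. g s (x s))" for x :: "nat \<Rightarrow> nat \<times> nat"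
    proof -
      have "(\<Prod>s\<in>{1..T}. g s (x s)) = (\<Prod>s\<in>{s\<in>{1..T}. s \<in> {u..<t}}. fl sig i s (x s))"
        unfolding g_def by (rule prod.inter_filter[symmetric]) simp
      then show ?thesis using sub by simp
    qed
    have "measure_pmf.expectation (bs_traj T p q) (\<lambda>x. \<Prod>s\<in>{u..<t}. fl sig i s (x s))
        = measure_pmf.expectation (bs_traj T p q) (\<lambda>x. \<Prod>s\<in>{1..T}. g s (x s))"
      by (simp add: pe)
    also have "\<dots> = (\<Prod>s\<in>{1..T}. measure_pmf.expectation (pair_pmf p q) (g s))"
      unfolding bs_traj_def
      by (rule expectation_prod_Pi_pmf) (use finpq in \<open>auto intro: integrable_measure_pmf_finite simp: g_def fl_def\<close>)
    also have "\<dots> = (\<Prod>s\<in>{1..T}. if s \<in> {u..<t} then measure_pmf.expectation (pair_pmf p q) (fl sig i s) else 1)"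
    proof (intro prod.cong refl)
      fix s
      show "measure_pmf.expectation (pair_pmf p q) (g s) = (if s \<in> {u..<t} then measure_pmf.expectation (pair_pmf p q) (fl sig i s) else 1)"
      proof (cases "s \<in> {u..<t}")
        case True
        then have "g s = fl sig i s" by (auto simp: g_def fun_eq_iff)
        then show ?thesis using True by simp
      next
        case False
        then have "g s = (\<lambda>_. 1)" by (auto simp: g_def fun_eq_iff)
        then have "measure_pmf.expectation (pair_pmf p q) (g s) = 1" by (simp add: measure_pmf.prob_space)
        then show ?thesis by (subst if_not_P[OF False])
      qed
    qed
    also have "\<dots> = (\<Prod>s\<in>{s\<in>{1..T}. s \<in> {u..<t}}. measure_pmf.expectation (pair_pmf p q) (fl sig i s))"
      by (rule prod.inter_filter[symmetric]) simp
    also have "\<dots> = (\<Prod>s\<in>{u..<t}. measure_pmf.expectation (pair_pmf p q) (fl sig i s))"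
      using sub by simp
    finally show "measure_pmf.expectation (bs_traj T p q) (\<lambda>x. \<Prod>s\<in>{u..<t}. fl sig i s (x s)) =
       (\<Prod>s\<in>{u..<t}. measure_pmf.expectation (pair_pmf p q) (fl sig i s))" .
  qed
  finally show ?thesis .
qed

lemma exp_fl:
  assumes p: "set_pmf p \<subseteq> {..<N}" and q: "set_pmf q \<subseteq> {..<Nsub}"
  shows "measure_pmf.expectation (pair_pmf p q) (fl sig i s) =
    1 - pmf p i * (\<Sum>j<Nsub. if sig j s = 1 then pmf q j else 0)"
proof -
  define Qs where "Qs = (\<Sum>j<Nsub. if sig j s = 1 then pmf q j else 0)"
  have fp: "finite (set_pmf p)" using p finite_subset by blast
  have fq: "finite (set_pmf q)" using q finite_subset by blast
  have inner: "measure_pmf.expectation q (\<lambda>b. fl sig i s (a, b)) = 1 - (if a = i then Qs else 0)" for a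
  proof -
    have "measure_pmf.expectation q (\<lambda>b. fl sig i s (a, b)) = (\<Sum>j<Nsub. fl sig i s (a, j) * pmf q j)"
      by (rule integral_measure_pmf_real) (use q in auto)
    also have "\<dots> = (\<Sum>j<Nsub. pmf q j - (if a = i then (if sig j s = 1 then pmf q j else 0) else 0))"
      by (intro sum.cong refl) (simp add: fl_def)
    also have "\<dots> = (\<Sum>j<Nsub. pmf q j) - (if a = i then Qs else 0)"
      by (simp add: sum_subtractf Qs_def)
    also have "(\<Sum>j<Nsub. pmf q j) = 1" by (rule sum_pmf_eq_1) (use q in auto)
    finally show ?thesis .
  qed
  have "measure_pmf.expectation (pair_pmf p q) (fl sig i s) =
        measure_pmf.expectation p (\<lambda>a. 1 - (if a = i then Qs else 0))"
    using exp_pair[OF fp fq, of "fl sig i s"] inner by simp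
  also have "\<dots> = (\<Sum>a<N. (1 - (if a = i then Qs else 0)) * pmf p a)"
    by (rule integral_measure_pmf_real) (use p in auto)
  also have "\<dots> = (\<Sum>a<N. pmf p a - (if a = i then Qs * pmf p a else 0))"
    by (intro sum.cong refl) (simp add: left_diff_distrib)
  also have "\<dots> = (\<Sum>a<N. pmf p a) - (\<Sum>a<N. if a = i then Qs * pmf p a else 0)"
    by (rule sum_subtractf)
  also have "(\<Sum>a<N. pmf p a) = 1" by (rule sum_pmf_eq_1) (use p in auto)
  also have "(\<Sum>a<N. if a = i then Qs * pmf p a else 0) = (if i \<in> {..<N} then Qs * pmf p i else 0)"
    by (rule sum.delta[OF finite_lessThan])
  also have "\<dots> = Qs * pmf p i"
    using p by (auto simp: pmf_eq_0_set_pmf)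
  finally show ?thesis by (simp add: Qs_def mult.commute)
qed



definition cc :: "nat \<Rightarrow> nat \<Rightarrow> real \<Rightarrow> nat \<Rightarrow> real" where
  "cc Nsub T \<alpha> s = (if s \<in> window T \<alpha> then 1 - 1 / real Nsub else 1)"

lemma window_sub: assumes "\<alpha> < 1" shows "window T \<alpha> \<subseteq> {..T}"
proof
  fix t assume "t \<in> window T \<alpha>"
  then have "real t \<le> (1 + \<alpha>) * real T / 2" by (simp add: window_def)
  also have "\<dots> \<le> real T"
  proof -
    have "\<alpha> * real T \<le> 1 * real T" by (rule mult_right_mono) (use assms in auto)
    moreover have "(1 + \<alpha>) * real T = real T + \<alpha> * real T" by (simp add: distrib_right)
    ultimately show ?thesis by linarith
  qed
  finally show "t \<in> {..T}" by simp
qed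

lemma window_fin: "\<alpha> < 1 \<Longrightarrow> finite (window T \<alpha>)"
  using window_sub finite_subset by blast

lemma exp_Pi_prod:
  fixes h :: "nat \<Rightarrow> 'a \<Rightarrow> real"
  assumes W: "finite W" and A: "finite A" and U: "finite (set_pmf U)"
    and nn: "\<And>s v. h s v \<ge> 0"
  shows "measure_pmf.expectation (Pi_pmf W d (\<lambda>_. U)) (\<lambda>b. \<Prod>s\<in>A. h s (b s)) =
         (\<Prod>s\<in>A. if s \<in> W then measure_pmf.expectation U (h s) else h s d)"
proof -
  let ?P = "Pi_pmf W d (\<lambda>_. U)"
  define C where "C = (\<Prod>s\<in>A - W. h s d)"
  define g where "g s v = (if s \<in> A then h s v else 1)" for s v
  have "measure_pmf.expectation ?P (\<lambda>b. \<Prod>s\<in>A. h s (b s)) =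
        measure_pmf.expectation ?P (\<lambda>b. C * (\<Prod>s\<in>W. g s (b s)))"
  proof (intro integral_cong_AE AE_pmfI)
    fix b assume b: "b \<in> set_pmf ?P"
    then have bd: "\<And>s. s \<notin> W \<Longrightarrow> b s = d" using W by (auto simp: set_Pi_pmf PiE_dflt_def)
    have "(\<Prod>s\<in>A. h s (b s)) = (\<Prod>s\<in>A \<inter> W. h s (b s)) * (\<Prod>s\<in>A - W. h s (b s))"
      by (rule prod.Int_Diff[OF A])
    also have "(\<Prod>s\<in>A - W. h s (b s)) = C" unfolding C_def by (intro prod.cong refl) (simp add: bd)
    also have "(\<Prod>s\<in>A \<inter> W. h s (b s)) = (\<Prod>s\<in>W. g s (b s))"
    proof -
      have "(\<Prod>s\<in>W. g s (b s)) = (\<Prod>s\<in>{s\<in>W. s \<in> A}. h s (b s))"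
        unfolding g_def by (rule prod.inter_filter[symmetric, OF W])
      also have "{s\<in>W. s \<in> A} = A \<inter> W" by auto
      finally show ?thesis by simp
    qed
    finally show "(\<Prod>s\<in>A. h s (b s)) = C * (\<Prod>s\<in>W. g s (b s))" by simp
  qed simp_all
  also have "\<dots> = C * measure_pmf.expectation ?P (\<lambda>b. \<Prod>s\<in>W. g s (b s))"
    by (rule Bochner_Integration.integral_mult_right_zero)
  also have "measure_pmf.expectation ?P (\<lambda>b. \<Prod>s\<in>W. g s (b s)) = (\<Prod>s\<in>W. measure_pmf.expectation U (g s))"
    by (rule expectation_prod_Pi_pmf[OF W]) (use U nn in \<open>auto intro: integrable_measure_pmf_finite simp: g_def\<close>)
  also have "\<dots> = (\<Prod>s\<in>W. if s \<in> A then measure_pmf.expectation U (h s) else 1)"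
  proof (intro prod.cong refl)
    fix s
    show "measure_pmf.expectation U (g s) = (if s \<in> A then measure_pmf.expectation U (h s) else 1)"
    proof (cases "s \<in> A")
      case True
      then have "g s = h s" by (auto simp: g_def fun_eq_iff)
      then show ?thesis using True by simp
    next
      case False
      then have "g s = (\<lambda>_. 1)" by (auto simp: g_def fun_eq_iff)
      then have "measure_pmf.expectation U (g s) = 1" by (simp add: measure_pmf.prob_space)
      then show ?thesis by (subst if_not_P[OF False])
    qed
  qed
  also have "\<dots> = (\<Prod>s\<in>{s\<in>W. s \<in> A}. measure_pmf.expectation U (h s))"
    by (rule prod.inter_filter[symmetric, OF W])
  also have "{s\<in>W. s \<in> A} = A \<inter> {s. s \<in> W}" by auto
  also have "C = (\<Prod>s\<in>A \<inter> - {s. s \<in> W}. h s d)" unfolding C_def by (intro prod.cong) auto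
  finally show ?thesis by (simp add: prod.If_cases[OF A] mult.commute)
qed

lemma Qs_mk:
  fixes q :: "nat pmf" and b :: "nat \<Rightarrow> nat"
  assumes q: "set_pmf q \<subseteq> {..<Nsub}"
  shows "(\<Sum>j<Nsub. if (\<lambda>j t. if t \<in> W \<and> b t = j then 0 else 1::nat) j s = 1 then pmf q j else 0)
       = (if s \<in> W then 1 - pmf q (b s) else 1)"
proof -
  have one: "(\<Sum>j<Nsub. pmf q j) = 1" by (rule sum_pmf_eq_1) (use q in auto)
  show ?thesis
  proof (cases "s \<in> W")
    case False
    then show ?thesis using one by simp
  next
    case True
    have "(\<Sum>j<Nsub. if (\<lambda>j t. if t \<in> W \<and> b t = j then 0 else 1::nat) j s = 1 then pmf q j else 0)
        = (\<Sum>j<Nsub. pmf q j - (if b s = j then pmf q j else 0))"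
      using True by (intro sum.cong refl) auto
    also have "\<dots> = 1 - (if b s \<in> {..<Nsub} then pmf q (b s) else 0)"
      by (simp only: sum_subtractf one sum.delta'[OF finite_lessThan])
    also have "\<dots> = 1 - pmf q (b s)"
      using q by (auto simp: pmf_eq_0_set_pmf)
    finally show ?thesis using True by simp
  qed
qed

lemma fin_sigma': "\<alpha> < 1 \<Longrightarrow> Nsub \<ge> 1 \<Longrightarrow> finite (set_pmf (sigma' Nsub T \<alpha>))"
  unfolding sigma'_def set_map_pmf
proof (intro finite_imageI)
  assume a: "\<alpha> < 1" "Nsub \<ge> 1"
  have ne: "{..<Nsub} \<noteq> {}" using a(2) by (metis lessThan_iff less_le_trans zero_less_one empty_iff)
  show "finite (set_pmf (Pi_pmf (window T \<alpha>) 0 (\<lambda>_. pmf_of_set {..<Nsub})))"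
    using ne by (simp add: set_Pi_pmf window_fin[OF a(1)] finite_PiE_dflt)
qed

lemma exp_sigma'_age:
  assumes p: "set_pmf p \<subseteq> {..<N}" and q: "set_pmf q \<subseteq> {..<Nsub}" and Ns: "Nsub \<ge> 1"
    and \<alpha>: "\<alpha> < 1" and t: "t \<in> {1..T}"
  shows "measure_pmf.expectation (pair_pmf (sigma' Nsub T \<alpha>) (bs_traj T p q)) (\<lambda>(sig, x). real (age sig x i t))
     = (\<Sum>u\<in>{1..t}. \<Prod>s\<in>{u..<t}. 1 - pmf p i * cc Nsub T \<alpha> s)"
proof -
  let ?W = "window T \<alpha>"
  let ?U = "pmf_of_set {..<Nsub}"
  let ?mk = "\<lambda>b j t. if t \<in> ?W \<and> b t = j then 0 else 1::nat"
  define \<pi> where "\<pi> = pmf p i"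
  define h where "h s v = 1 - \<pi> * (if s \<in> ?W then 1 - pmf q v else 1)" for s v
  have fp: "finite (set_pmf p)" using p finite_subset by blast
  have fq: "finite (set_pmf q)" using q finite_subset by blast
  have fW: "finite ?W" by (rule window_fin[OF \<alpha>])
  have ne: "{..<Nsub} \<noteq> {}" using Ns by (metis lessThan_iff less_le_trans zero_less_one empty_iff)
  have fU: "finite (set_pmf ?U)" using ne by simp
  have finPi: "finite (set_pmf (Pi_pmf ?W 0 (\<lambda>_. ?U)))"
    using fW fU by (auto simp: set_Pi_pmf intro!: finite_PiE_dflt)
  have \<pi>01: "0 \<le> \<pi>" "\<pi> \<le> 1" by (simp_all add: \<pi>_def pmf_le_1)
  have hnn: "h s v \<ge> 0" for s v
  proof -
    have "0 \<le> pmf q v" "pmf q v \<le> 1" by (simp_all add: pmf_le_1)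
    then have "\<pi> * (if s \<in> ?W then 1 - pmf q v else 1) \<le> 1"
      using \<pi>01 by (auto intro: mult_le_one)
    then show ?thesis by (simp add: h_def)
  qed
  have "measure_pmf.expectation (pair_pmf (sigma' Nsub T \<alpha>) (bs_traj T p q)) (\<lambda>(sig, x). real (age sig x i t))
      = measure_pmf.expectation (sigma' Nsub T \<alpha>) (\<lambda>sig. measure_pmf.expectation (bs_traj T p q) (\<lambda>x. real (age sig x i t)))"
    by (simp add: exp_pair[OF fin_sigma'[OF \<alpha> Ns] fin_bs[OF fp fq]])
  also have "\<dots> = measure_pmf.expectation (Pi_pmf ?W 0 (\<lambda>_. ?U))
      (\<lambda>b. \<Sum>u\<in>{1..t}. \<Prod>s\<in>{u..<t}. h s (b s))"
  proof -
    have "measure_pmf.expectation (bs_traj T p q) (\<lambda>x. real (age (?mk b) x i t)) = (\<Sum>u\<in>{1..t}. \<Prod>s\<in>{u..<t}. h s (b s))" for b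
      unfolding exp_bs[OF fp fq t] exp_fl[OF p q] Qs_mk[OF q] h_def \<pi>_def ..
    then show ?thesis unfolding sigma'_def by simp
  qed
  also have "\<dots> = (\<Sum>u\<in>{1..t}. measure_pmf.expectation (Pi_pmf ?W 0 (\<lambda>_. ?U)) (\<lambda>b. \<Prod>s\<in>{u..<t}. h s (b s)))"
    by (rule Bochner_Integration.integral_sum) (use finPi in \<open>auto intro: integrable_measure_pmf_finite\<close>)
  also have "\<dots> = (\<Sum>u\<in>{1..t}. \<Prod>s\<in>{u..<t}. if s \<in> ?W then measure_pmf.expectation ?U (h s) else h s 0)"
    by (intro sum.cong refl exp_Pi_prod fW fU hnn) simp
  also have "\<dots> = (\<Sum>u\<in>{1..t}. \<Prod>s\<in>{u..<t}. 1 - pmf p i * cc Nsub T \<alpha> s)"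
  proof (intro sum.cong refl prod.cong)
    fix s
    show "(if s \<in> ?W then measure_pmf.expectation ?U (h s) else h s 0) = 1 - pmf p i * cc Nsub T \<alpha> s"
    proof (cases "s \<in> ?W")
      case True
      have "measure_pmf.expectation ?U (h s) = (\<Sum>v<Nsub. h s v) / real Nsub"
        using ne by (subst integral_pmf_of_set) auto
      also have "(\<Sum>v<Nsub. h s v) = (\<Sum>v<Nsub. (1 - \<pi>) + \<pi> * pmf q v)"
        using True by (intro sum.cong refl) (simp add: h_def algebra_simps)
      also have "\<dots> = real Nsub * (1 - \<pi>) + \<pi> * (\<Sum>v<Nsub. pmf q v)"
        by (simp add: sum.distrib sum_distrib_left)
      also have "(\<Sum>v<Nsub. pmf q v) = 1" by (rule sum_pmf_eq_1) (use q in auto)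
      finally have "measure_pmf.expectation ?U (h s) = 1 - \<pi> * (1 - 1 / real Nsub)"
        using Ns by (simp add: field_simps)
      then show ?thesis using True by (simp add: cc_def \<pi>_def)
    next
      case False
      then show ?thesis by (simp add: h_def cc_def \<pi>_def)
    qed
  qed
  finally show ?thesis .
qed



definition good :: "(real \<Rightarrow> real) \<Rightarrow> bool" where
  "good f \<longleftrightarrow> convex_on {0..1} f \<and> (\<forall>x\<in>{0..1}. 0 \<le> f x) \<and>
     (\<forall>x\<in>{0..1}. \<forall>y\<in>{0..1}. x \<le> y \<longrightarrow> f y \<le> f x)"

lemma good_mult:
  assumes f: "good f" and g: "good g"
  shows "good (\<lambda>x. f x * g x)"
proof -
  have cf: "convex_on {0..1} f" and nf: "\<And>x. x \<in> {0..1} \<Longrightarrow> 0 \<le> f x"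
    and mf: "\<And>x y. x \<in> {0..1} \<Longrightarrow> y \<in> {0..1} \<Longrightarrow> x \<le> y \<Longrightarrow> f y \<le> f x"
    using f by (auto simp: good_def)
  have cg: "convex_on {0..1} g" and ng: "\<And>x. x \<in> {0..1} \<Longrightarrow> 0 \<le> g x"
    and mg: "\<And>x y. x \<in> {0..1} \<Longrightarrow> y \<in> {0..1} \<Longrightarrow> x \<le> y \<Longrightarrow> g y \<le> g x"
    using g by (auto simp: good_def)
  have conv: "convex_on {0..1} (\<lambda>x. f x * g x)"
    unfolding convex_on_def
  proof (intro conjI ballI allI impI)
    show "convex {0..1::real}" by simp
    fix x y :: real and u v :: real
    assume x: "x \<in> {0..1}" and y: "y \<in> {0..1}" and u: "0 \<le> u" and v: "0 \<le> v" and uv: "u + v = 1"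
    let ?m = "u *\<^sub>R x + v *\<^sub>R y"
    have m01: "?m \<in> {0..1}"
    proof -
      have "0 \<le> u * x + v * y" using x y u v by auto
      moreover have "u * x + v * y \<le> u * 1 + v * 1"
        using x y u v by (intro add_mono mult_left_mono) auto
      ultimately show ?thesis using uv by simp
    qed
    have F: "f ?m \<le> u * f x + v * f y" using cf x y u v uv by (auto simp: convex_on_def)
    have G: "g ?m \<le> u * g x + v * g y" using cg x y u v uv by (auto simp: convex_on_def)
    have "f ?m * g ?m \<le> (u * f x + v * f y) * (u * g x + v * g y)"
      by (rule mult_mono[OF F G]) (use nf[OF m01] ng[OF m01] F in auto)
    also have "\<dots> = u * (f x * g x) + v * (f y * g y) - u * v * ((f x - f y) * (g x - g y))"
    proof -
      have vv: "v = 1 - u" using uv by simp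
      show ?thesis unfolding vv by (simp add: algebra_simps)
    qed
    also have "\<dots> \<le> u * (f x * g x) + v * (f y * g y)"
    proof -
      have "0 \<le> (f x - f y) * (g x - g y)"
      proof (cases "x \<le> y")
        case True
        then show ?thesis using mf[OF x y] mg[OF x y] by (intro mult_nonneg_nonneg) auto
      next
        case False
        then show ?thesis using mf[OF y x] mg[OF y x] by (intro mult_nonpos_nonpos) auto
      qed
      then show ?thesis using u v by (simp add: mult_nonneg_nonneg)
    qed
    finally show "f ?m * g ?m \<le> u * (f x * g x) + v * (f y * g y)" .
  qed
  show ?thesis unfolding good_def
  proof (intro conjI conv ballI impI)
    fix x assume "x \<in> {0..1::real}"
    then show "0 \<le> f x * g x" using nf ng by simp
  next
    fix x y :: real assume x: "x \<in> {0..1}" and y: "y \<in> {0..1}" and xy: "x \<le> y"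
    show "f y * g y \<le> f x * g x"
      by (rule mult_mono) (use mf[OF x y xy] mg[OF x y xy] nf ng x y in auto)
  qed
qed

lemma good_lin:
  assumes "0 \<le> c" "c \<le> 1"
  shows "good (\<lambda>x. 1 - x * c)"
  unfolding good_def
proof (intro conjI ballI impI)
  show "convex_on {0..1} (\<lambda>x. 1 - x * c)"
    unfolding convex_on_def by (auto simp: algebra_simps)
next
  fix x :: real assume "x \<in> {0..1}"
  then have "x * c \<le> 1 * 1" using assms by (intro mult_mono) auto
  then show "0 \<le> 1 - x * c" by simp
next
  fix x y :: real assume "x \<in> {0..1}" "y \<in> {0..1}" "x \<le> y"
  then show "1 - y * c \<le> 1 - x * c" using assms by (simp add: mult_right_mono)
qed

lemma good_one: "good (\<lambda>_. 1)"
  unfolding good_def convex_on_def by auto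

lemma good_prod:
  assumes "finite A" "\<And>s. s \<in> A \<Longrightarrow> 0 \<le> c s \<and> c s \<le> 1"
  shows "good (\<lambda>x. \<Prod>s\<in>A. 1 - x * c s)"
  using assms
proof (induction A rule: finite_induct)
  case empty
  then show ?case by (simp add: good_one)
next
  case (insert a A)
  have "good (\<lambda>x. (1 - x * c a) * (\<Prod>s\<in>A. 1 - x * c s))"
    by (rule good_mult[OF good_lin]) (use insert in auto)
  then show ?case using insert by simp
qed

lemma convex_on_sum_fun:
  assumes "finite A" "convex C" "\<And>a. a \<in> A \<Longrightarrow> convex_on C (f a)"
  shows "convex_on C (\<lambda>x. \<Sum>a\<in>A. f a x)"
  using assms
proof (induction A rule: finite_induct)
  case empty
  then show ?case by (simp add: convex_on_const)
next
  case (insert a A)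
  then have "convex_on C (\<lambda>x. f a x + (\<Sum>a\<in>A. f a x))"
    by (intro convex_on_add) auto
  then show ?case using insert by simp
qed

definition HH :: "nat \<Rightarrow> (nat \<Rightarrow> real) \<Rightarrow> real \<Rightarrow> real" where
  "HH T c \<pi> = (\<Sum>t\<in>{1..T}. \<Sum>u\<in>{1..t}. \<Prod>s\<in>{u..<t}. 1 - \<pi> * c s)"

lemma HH_convex:
  assumes "\<And>s. 0 \<le> c s \<and> c s \<le> 1"
  shows "convex_on {0..1} (HH T c)"
  unfolding HH_def
  by (intro convex_on_sum_fun finite_atLeastAtMost convex_real_interval(5))
     (use good_prod[of _ c] assms in \<open>auto simp: good_def\<close>)

lemma jensen_HH:
  assumes c: "\<And>s. 0 \<le> c s \<and> c s \<le> 1" and N: "N \<ge> 1" and p: "set_pmf p \<subseteq> {..<N}"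
  shows "HH T c (1 / real N) \<le> (1 / real N) * (\<Sum>i<N. HH T c (pmf p i))"
proof -
  have "HH T c (\<Sum>i<N. (1 / real N) *\<^sub>R pmf p i) \<le> (\<Sum>i<N. (1 / real N) * HH T c (pmf p i))"
  proof (rule convex_on_sum[OF _ _ HH_convex[OF c]])
    have "(0::nat) \<in> {..<N}" using N by simp
    then show "{..<N} \<noteq> {}" by blast
  qed (use N in \<open>auto simp: pmf_le_1\<close>)
  moreover have "(\<Sum>i<N. (1 / real N) *\<^sub>R pmf p i) = 1 / real N"
  proof -
    have "(\<Sum>i<N. (1 / real N) *\<^sub>R pmf p i) = (1 / real N) * (\<Sum>i<N. pmf p i)"
      by (simp add: sum_distrib_left)
    also have "(\<Sum>i<N. pmf p i) = 1" by (rule sum_pmf_eq_1) (use p in auto)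
    finally show ?thesis by simp
  qed
  ultimately show ?thesis by (simp add: sum_distrib_left)
qed



lemma exp_det_age:
  assumes p: "set_pmf p \<subseteq> {..<N}" and q: "set_pmf q \<subseteq> {..<Nsub}" and t: "t \<in> {1..T}"
  shows "measure_pmf.expectation (pair_pmf (return_pmf sig) (bs_traj T p q)) (\<lambda>(sig, x). real (age sig x i t))
     = (\<Sum>u\<in>{1..t}. \<Prod>s\<in>{u..<t}. 1 - pmf p i * (\<Sum>j<Nsub. if sig j s = 1 then pmf q j else 0))"
proof -
  have fp: "finite (set_pmf p)" using p finite_subset by blast
  have fq: "finite (set_pmf q)" using q finite_subset by blast
  have "measure_pmf.expectation (pair_pmf (return_pmf sig) (bs_traj T p q)) (\<lambda>(sig, x). real (age sig x i t))
     = measure_pmf.expectation (return_pmf sig) (\<lambda>sg. measure_pmf.expectation (bs_traj T p q) (\<lambda>x. real (age sg x i t)))"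
    by (simp add: exp_pair[OF _ fin_bs[OF fp fq]])
  also have "\<dots> = measure_pmf.expectation (bs_traj T p q) (\<lambda>x. real (age sig x i t))" by simp
  also have "\<dots> = (\<Sum>u\<in>{1..t}. \<Prod>s\<in>{u..<t}. 1 - pmf p i * (\<Sum>j<Nsub. if sig j s = 1 then pmf q j else 0))"
    unfolding exp_bs[OF fp fq t] exp_fl[OF p q] ..
  finally show ?thesis .
qed

lemma swap_payoff:
  fixes F :: "nat \<Rightarrow> nat \<Rightarrow> real"
  shows "1 / real T * (\<Sum>t\<in>{1..T}. 1 / real N * (\<Sum>i<N. F i t)) = 1 / real T * (1 / real N * (\<Sum>i<N. \<Sum>t\<in>{1..T}. F i t))"
proof -
  have "(\<Sum>t\<in>{1..T}. 1 / real N * (\<Sum>i<N. F i t)) = 1 / real N * (\<Sum>t\<in>{1..T}. \<Sum>i<N. F i t)"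
    by (rule sum_distrib_left[symmetric])
  also have "(\<Sum>t\<in>{1..T}. \<Sum>i<N. F i t) = (\<Sum>i<N. \<Sum>t\<in>{1..T}. F i t)"
    by (rule sum.swap)
  finally show ?thesis by simp
qed

lemma payoff_sigma'_eq:
  assumes p: "set_pmf p \<subseteq> {..<N}" and q: "set_pmf q \<subseteq> {..<Nsub}" and Ns: "Nsub \<ge> 1" and \<alpha>: "\<alpha> < 1"
  shows "payoff N T p q (sigma' Nsub T \<alpha>) = 1 / real T * (1 / real N * (\<Sum>i<N. HH T (cc Nsub T \<alpha>) (pmf p i)))"
proof -
  have "payoff N T p q (sigma' Nsub T \<alpha>) = 1 / real T * (\<Sum>t\<in>{1..T}. 1 / real N * (\<Sum>i<N.
          \<Sum>u\<in>{1..t}. \<Prod>s\<in>{u..<t}. 1 - pmf p i * cc Nsub T \<alpha> s))"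
    unfolding payoff_def
    by (intro arg_cong2[where f="(*)"] refl sum.cong exp_sigma'_age[OF p q Ns \<alpha>])
  also have "\<dots> = 1 / real T * (1 / real N * (\<Sum>i<N. HH T (cc Nsub T \<alpha>) (pmf p i)))"
    unfolding swap_payoff HH_def ..
  finally show ?thesis .
qed

lemma payoff_det_eq:
  assumes p: "set_pmf p \<subseteq> {..<N}" and q: "set_pmf q \<subseteq> {..<Nsub}"
  shows "payoff_det N T p q sig = 1 / real T * (1 / real N * (\<Sum>i<N. \<Sum>t\<in>{1..T}.
          \<Sum>u\<in>{1..t}. \<Prod>s\<in>{u..<t}. 1 - pmf p i * (\<Sum>j<Nsub. if sig j s = 1 then pmf q j else 0)))"
proof -
  have "payoff_det N T p q sig = 1 / real T * (\<Sum>t\<in>{1..T}. 1 / real N * (\<Sum>i<N.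
          \<Sum>u\<in>{1..t}. \<Prod>s\<in>{u..<t}. 1 - pmf p i * (\<Sum>j<Nsub. if sig j s = 1 then pmf q j else 0)))"
    unfolding payoff_det_def payoff_def
    by (intro arg_cong2[where f="(*)"] refl sum.cong exp_det_age[OF p q])
  also have "\<dots> = 1 / real T * (1 / real N * (\<Sum>i<N. \<Sum>t\<in>{1..T}.
          \<Sum>u\<in>{1..t}. \<Prod>s\<in>{u..<t}. 1 - pmf p i * (\<Sum>j<Nsub. if sig j s = 1 then pmf q j else 0)))"
    by (rule swap_payoff)
  finally show ?thesis .
qed

lemma GG_cong: "(\<And>s. s \<in> {1..<T} \<Longrightarrow> z s = z' s) \<Longrightarrow> GG T z = GG T z'"
  unfolding GG_def by (intro sum.cong prod.cong refl) auto

lemma nonempty_lessThan: "(n::nat) \<ge> 1 \<Longrightarrow> {..<n} \<noteq> {}"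
proof -
  assume "n \<ge> 1"
  then have "(0::nat) \<in> {..<n}" by simp
  then show ?thesis by blast
qed

lemma pmf_unif: "(n::nat) \<ge> 1 \<Longrightarrow> i < n \<Longrightarrow> pmf (pmf_of_set {..<n}) i = 1 / real n"
  using nonempty_lessThan[of n] by (simp add: pmf_of_set)

lemma set_unif: "(n::nat) \<ge> 1 \<Longrightarrow> set_pmf (pmf_of_set {..<n}) = {..<n}"
  using nonempty_lessThan[of n] by simp

lemma avg_const:
  fixes G :: real
  assumes "N \<ge> 1"
  shows "1 / real N * (\<Sum>i<N. G) = G"
  using assms by simp

lemma window_eq:
  assumes k: "(1 - \<alpha>) * real T = 2 * real k" and a: "0 < \<alpha>"
  shows "window T \<alpha> = {k+1..k+(T - 2*k)}" and "2*k \<le> T" and "real (T - 2*k) = \<alpha> * real T"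
proof -
  have "2 * real k \<le> real T"
  proof -
    have "(1 - \<alpha>) * real T \<le> 1 * real T" by (rule mult_right_mono) (use a in auto)
    then show ?thesis using k by simp
  qed
  then show kT: "2*k \<le> T" by linarith
  show "real (T - 2*k) = \<alpha> * real T" using kT k by (simp add: of_nat_diff algebra_simps)
  have a: "\<alpha> * real T = real T - 2 * real k" using k by (simp add: algebra_simps)
  have up: "(1 + \<alpha>) * real T / 2 = real T - real k" by (simp add: distrib_right a field_simps)
  have lo: "(1 - \<alpha>) * real T / 2 + 1 = real k + 1" using k by simp
  show "window T \<alpha> = {k+1..k+(T - 2*k)}"
  proof (rule set_eqI)
    fix t
    have "t \<in> window T \<alpha> \<longleftrightarrow> real k + 1 \<le> real t \<and> real t \<le> real T - real k"
      unfolding window_def mem_Collect_eq up lo ..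
    also have "\<dots> \<longleftrightarrow> t \<in> {k+1..k+(T - 2*k)}" using kT by auto
    finally show "t \<in> window T \<alpha> \<longleftrightarrow> t \<in> {k+1..k+(T - 2*k)}" .
  qed
qed



theorem theorem13:
  fixes N Nsub T :: nat and \<alpha> :: real
  assumes "N \<ge> 1" and "Nsub \<ge> 2"
    and "0 < \<alpha>" and "\<alpha> < 1"
    and "\<alpha> * real T \<in> \<int>"
    and "\<exists>k::nat. (1 - \<alpha>) * real T = 2 * real k"
  shows "(\<forall>p q. set_pmf p \<subseteq> {..<N} \<longrightarrow> set_pmf q \<subseteq> {..<Nsub} \<longrightarrow>
            payoff N T (pmf_of_set {..<N}) (pmf_of_set {..<Nsub}) (sigma' Nsub T \<alpha>)
              \<le> payoff N T p q (sigma' Nsub T \<alpha>))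
       \<and> (\<forall>sig\<in>set_pmf (sigma' Nsub T \<alpha>). feasible Nsub T \<alpha> sig)
       \<and> (\<forall>sig. feasible Nsub T \<alpha> sig \<longrightarrow>
            payoff_det N T (pmf_of_set {..<N}) (pmf_of_set {..<Nsub}) sig
              \<le> payoff N T (pmf_of_set {..<N}) (pmf_of_set {..<Nsub}) (sigma' Nsub T \<alpha>))"
proof -
  obtain k :: nat where hk: "(1 - \<alpha>) * real T = 2 * real k" using assms(6) by blast
  define K where "K = T - 2*k"
  have Weq: "window T \<alpha> = {k+1..k+K}" and kT: "2*k \<le> T" and rK: "real K = \<alpha> * real T"
    using window_eq[OF hk assms(3)] by (simp_all add: K_def)
  have N1: "N \<ge> 1" using assms(1) .
  have Ns1: "Nsub \<ge> 1" using assms(2) by simp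
  let ?UN = "pmf_of_set {..<N}"
  let ?UQ = "pmf_of_set {..<Nsub}"
  let ?S = "sigma' Nsub T \<alpha>"
  have setUN: "set_pmf ?UN \<subseteq> {..<N}" using set_unif[OF N1] by simp
  have setUQ: "set_pmf ?UQ \<subseteq> {..<Nsub}" using set_unif[OF Ns1] by simp
  have cc01: "0 \<le> cc Nsub T \<alpha> s \<and> cc Nsub T \<alpha> s \<le> 1" for s
    using Ns1 by (simp add: cc_def field_simps)
  have unif_val: "payoff N T ?UN ?UQ ?S = 1 / real T * HH T (cc Nsub T \<alpha>) (1 / real N)"
  proof -
    have "payoff N T ?UN ?UQ ?S = 1 / real T * (1 / real N * (\<Sum>i<N. HH T (cc Nsub T \<alpha>) (pmf ?UN i)))"
      by (rule payoff_sigma'_eq[OF setUN setUQ Ns1 assms(4)])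
    also have "(\<Sum>i<N. HH T (cc Nsub T \<alpha>) (pmf ?UN i)) = (\<Sum>i<N. HH T (cc Nsub T \<alpha>) (1 / real N))"
      by (intro sum.cong refl) (simp add: pmf_unif[OF N1])
    finally show ?thesis using avg_const[OF N1] by simp
  qed
  have P1: "\<forall>p q. set_pmf p \<subseteq> {..<N} \<longrightarrow> set_pmf q \<subseteq> {..<Nsub} \<longrightarrow>
            payoff N T ?UN ?UQ ?S \<le> payoff N T p q ?S"
  proof (intro allI impI)
    fix p q :: "nat pmf"
    assume p: "set_pmf p \<subseteq> {..<N}" and q: "set_pmf q \<subseteq> {..<Nsub}"
    have "HH T (cc Nsub T \<alpha>) (1 / real N) \<le> 1 / real N * (\<Sum>i<N. HH T (cc Nsub T \<alpha>) (pmf p i))"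
      by (rule jensen_HH[OF cc01 N1 p])
    then have "1 / real T * HH T (cc Nsub T \<alpha>) (1 / real N) \<le> 1 / real T * (1 / real N * (\<Sum>i<N. HH T (cc Nsub T \<alpha>) (pmf p i)))"
      by (rule mult_left_mono) simp
    then show "payoff N T ?UN ?UQ ?S \<le> payoff N T p q ?S"
      unfolding unif_val payoff_sigma'_eq[OF p q Ns1 assms(4)] .
  qed
  have P2: "\<forall>sig\<in>set_pmf ?S. feasible Nsub T \<alpha> sig"
  proof
    fix sig assume "sig \<in> set_pmf ?S"
    then obtain b where b: "b \<in> PiE_dflt (window T \<alpha>) 0 (\<lambda>_. {..<Nsub})"
      and sig: "sig = (\<lambda>j t. if t \<in> window T \<alpha> \<and> b t = j then 0 else 1)"
      unfolding sigma'_def using window_fin[OF assms(4)] set_unif[OF Ns1]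
      by (auto simp: set_Pi_pmf o_def)
    have bW: "b t < Nsub" if "t \<in> window T \<alpha>" for t
      using b that by (auto simp: PiE_dflt_def)
    have col: "(\<Sum>j<Nsub. 1 - sig j t) = (if t \<in> window T \<alpha> then 1 else 0)" for t
    proof (cases "t \<in> window T \<alpha>")
      case True
      have "(\<Sum>j<Nsub. 1 - sig j t) = (\<Sum>j<Nsub. if b t = j then 1 else 0)"
        by (intro sum.cong refl) (auto simp: sig True)
      also have "\<dots> = (if b t \<in> {..<Nsub} then 1 else 0)"
        by (rule sum.delta'[OF finite_lessThan])
      finally show ?thesis using bW[OF True] True by simp
    next
      case False
      then show ?thesis by (simp add: sig)
    qed
    have WT: "window T \<alpha> \<subseteq> {1..T}" using Weq kT K_def by auto
    have "(\<Sum>j<Nsub. \<Sum>t\<in>{1..T}. 1 - sig j t) = (\<Sum>t\<in>{1..T}. \<Sum>j<Nsub. 1 - sig j t)"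
      by (rule sum.swap)
    also have "\<dots> = (\<Sum>t\<in>{1..T}. if t \<in> window T \<alpha> then 1 else 0)"
      by (intro sum.cong refl) (rule col)
    also have "\<dots> = card ({1..T} \<inter> window T \<alpha>)"
      by (simp add: sum.inter_restrict[symmetric])
    also have "{1..T} \<inter> window T \<alpha> = window T \<alpha>" using WT by auto
    also have "card (window T \<alpha>) = K" by (simp add: Weq)
    finally have tot: "(\<Sum>j<Nsub. \<Sum>t\<in>{1..T}. 1 - sig j t) = K" .
    show "feasible Nsub T \<alpha> sig"
      unfolding feasible_def
    proof (intro conjI ballI allI impI)
      fix j t show "sig j t \<in> {0, 1}" by (simp add: sig)
    next
      show "real (\<Sum>j<Nsub. \<Sum>t\<in>{1..T}. 1 - sig j t) \<le> \<alpha> * real T" using tot rK by simp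
    next
      fix t show "(\<Sum>j<Nsub. 1 - sig j t) \<le> 1" unfolding col[of t] by simp
    qed
  qed
  have P3: "\<forall>sig. feasible Nsub T \<alpha> sig \<longrightarrow> payoff_det N T ?UN ?UQ sig \<le> payoff N T ?UN ?UQ ?S"
  proof (intro allI impI)
    fix sig assume feas: "feasible Nsub T \<alpha> sig"
    show "payoff_det N T ?UN ?UQ sig \<le> payoff N T ?UN ?UQ ?S"
    proof (cases "T = 0")
      case True
      then show ?thesis by (simp add: payoff_det_def payoff_def)
    next
      case False
      have k1: "1 \<le> k"
      proof -
        have "0 < (1 - \<alpha>) * real T" using False assms(4) by simp
        then show ?thesis using hk by simp
      qed
      have vals: "\<And>j t. j < Nsub \<Longrightarrow> t \<in> {1..T} \<Longrightarrow> sig j t \<in> {0, 1}"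
        and totr: "real (\<Sum>j<Nsub. \<Sum>t\<in>{1..T}. 1 - sig j t) \<le> \<alpha> * real T"
        and coll: "\<And>t. t \<in> {1..T} \<Longrightarrow> (\<Sum>j<Nsub. 1 - sig j t) \<le> 1"
        using feas unfolding feasible_def by auto
      define x where "x = 1 - 1 / real N"
      define y where "y = 1 - 1 / real N * (1 - 1 / real Nsub)"
      define D where "D s = (\<Sum>j<Nsub. 1 - sig j s)" for s
      define Qs where "Qs s = (\<Sum>j<Nsub. if sig j s = 1 then pmf ?UQ j else 0)" for s
      have x0: "0 \<le> x" using N1 by (simp add: x_def field_simps)
      have xy: "x \<le> y" using N1 Ns1 by (simp add: x_def y_def field_simps)
      have zval: "1 - 1 / real N * Qs s = (if D s = 1 then y else x)" if s: "s \<in> {1..T}" for s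
      proof -
        have "Qs s = (\<Sum>j<Nsub. 1 / real Nsub * (1 - real (1 - sig j s)))"
          unfolding Qs_def
        proof (intro sum.cong refl)
          fix j assume j: "j \<in> {..<Nsub}"
          then have "sig j s \<in> {0, 1}" using vals s by simp
          then show "(if sig j s = 1 then pmf ?UQ j else 0) = 1 / real Nsub * (1 - real (1 - sig j s))"
            using j by (auto simp: pmf_unif[OF Ns1])
        qed
        also have "\<dots> = 1 / real Nsub * (\<Sum>j<Nsub. (1 - real (1 - sig j s)))"
          by (rule sum_distrib_left[symmetric])
        also have "(\<Sum>j<Nsub. (1 - real (1 - sig j s))) = real Nsub - real (D s)"
          by (simp add: sum_subtractf D_def)
        finally have Q: "Qs s = 1 / real Nsub * (real Nsub - real (D s))" .
        have "D s \<le> 1" using coll[OF s] by (simp add: D_def)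
        then consider "D s = 0" | "D s = 1" by linarith
        then show ?thesis
        proof cases
          case 1 then show ?thesis using Q Ns1 by (simp add: x_def)
        next
          case 2
          have "Qs s = 1 - 1 / real Nsub" using Q 2 Ns1 by (simp add: field_simps)
          then show ?thesis using 2 by (simp add: y_def)
        qed
      qed
      define B where "B = {s\<in>{1..<T}. D s = 1}"
      have B: "B \<subseteq> {1..<T}" by (auto simp: B_def)
      have cardB: "card B \<le> K"
      proof -
        have "card B = (\<Sum>s\<in>B. D s)" by (simp add: B_def)
        also have "\<dots> \<le> (\<Sum>s\<in>{1..T}. D s)" by (rule sum_mono2) (auto simp: B_def)
        also have "\<dots> = (\<Sum>j<Nsub. \<Sum>t\<in>{1..T}. 1 - sig j t)" unfolding D_def by (rule sum.swap)
        finally have "real (card B) \<le> real (\<Sum>j<Nsub. \<Sum>t\<in>{1..T}. 1 - sig j t)" by linarith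
        also have "\<dots> \<le> real K" using totr rK by simp
        finally show ?thesis by simp
      qed
      have lhs: "payoff_det N T ?UN ?UQ sig = 1 / real T * GG T (\<lambda>s. if s \<in> B then y else x)"
      proof -
        have "payoff_det N T ?UN ?UQ sig = 1 / real T * (1 / real N * (\<Sum>i<N. \<Sum>t\<in>{1..T}.
              \<Sum>u\<in>{1..t}. \<Prod>s\<in>{u..<t}. 1 - pmf ?UN i * Qs s))"
          unfolding Qs_def by (rule payoff_det_eq[OF setUN setUQ])
        also have "(\<Sum>i<N. \<Sum>t\<in>{1..T}. \<Sum>u\<in>{1..t}. \<Prod>s\<in>{u..<t}. 1 - pmf ?UN i * Qs s)
            = (\<Sum>i<N. GG T (\<lambda>s. 1 - 1 / real N * Qs s))"
          unfolding GG_def by (intro sum.cong refl) (simp add: pmf_unif[OF N1])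
        also have "GG T (\<lambda>s. 1 - 1 / real N * Qs s) = GG T (\<lambda>s. if s \<in> B then y else x)"
        proof (rule GG_cong)
          fix s assume s: "s \<in> {1..<T}"
          then have s': "s \<in> {1..T}" by simp
          have "(s \<in> B) = (D s = 1)" using s by (simp add: B_def)
          then show "1 - 1 / real N * Qs s = (if s \<in> B then y else x)" using zval[OF s'] by simp
        qed
        finally show ?thesis using avg_const[OF N1] by simp
      qed
      have rhs: "payoff N T ?UN ?UQ ?S = 1 / real T * GG T (\<lambda>s. if s \<in> {k+1..k+K} then y else x)"
      proof -
        have "HH T (cc Nsub T \<alpha>) (1 / real N) = GG T (\<lambda>s. 1 - 1 / real N * cc Nsub T \<alpha> s)"
          unfolding HH_def GG_def ..
        also have "\<dots> = GG T (\<lambda>s. if s \<in> {k+1..k+K} then y else x)"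
          by (rule GG_cong) (auto simp: cc_def Weq x_def y_def)
        finally show ?thesis using unif_val by simp
      qed
      have "GG T (\<lambda>s. if s \<in> B then y else x) \<le> GG T (\<lambda>s. if s \<in> {k+1..k+K} then y else x)"
        by (rule comb_main[OF x0 xy _ k1 B cardB]) (use kT in \<open>simp add: K_def\<close>)
      then show ?thesis unfolding lhs rhs by (rule mult_left_mono) simp
    qed
  qed
  show ?thesis using P1 P2 P3 by blast
qed

end
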